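(* Let $k>2$, let $T_k$ be the theory of the countable universal homogeneous $k$-uniform hypergraph in $\mathcal{L}_k=\{R\}$ ($R$ $k$-ary), $\mathcal{U}$ a monster model of $T_k$ and $M\prec\mathcal{U}$ a countable elementary submodel. Suppose that $W$ is a Borel $k$-ary hypergraphon. Then $\mu_W$ is Borel-definable over $M$: for every $\mathcal{L}_k$-formula $\varphi(x,\bar y)$ the map $S_{\bar y}(M)\to[0,1]$, $\operatorname{tp}(\bar b/M)\mapsto\mu_W(\varphi(x,\bar b))$, is Borel.
   Context: Local type spaces. For a finite set $I$ with $1\le|I|\le k-1$, $S^{\flat}_I$ is the space of complete $R$-types over $M$ in the variables $\{x_i:i\in I\}$: maximal consistent sets of formulas $R(\bar x_I,D)$, $\neg R(\bar x_I,D)$ with $D\subseteq M$, $|D|=k-|I|$ (independent of the order of variables; same for any set of named variables). $\lambda_I$ is the Borel probability measure on $S^{\flat}_I$ such that for distinct $D_1,\dots,D_{n+m}\subseteq M$ of size $k-|I|$ the set of types containing $R(\bar x_I,D_l)$ for $l\le n$ and $\neg R(\bar x_I,D_l)$ for $n<l\le n+m$ has measure $2^{-(n+m)}$. For $D\subseteq\mathcal{U}$ with $1\le|D|\le k-1$, $\operatorname{tp}^{\flat}(D)=\{R(\bar x,E):E\subseteq M,|E|=k-|D|,\mathcal{U}\models R(D,E)\}\cup\{\neg R(\bar x,E):\mathcal{U}\models\neg R(D,E)\}$. Hypergraphons. $\mathfrak{m}$ is Lebesgue measure. A $k$-ary hypergraphon is a measurable $W\colon\prod_{I\subseteq[k],1\le|I|\le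 k-1}[0,1]\to[0,1]$ invariant under the action of $\mathrm{Sym}(k)$ permuting the index sets; Borel if Borel measurable. Fix for each $1\le j\le k-1$ a measure isomorphism between $(S^{\flat}_{[j]},\lambda_{[j]})$ and $([0,1],\mathfrak{m})$, transported to every $S^{\flat}_I$ with $|I|=j$; via these, $W$ is regarded as a function on $\prod_{I}S^{\flat}_I$. The measure $\mu_W$. For finite $B\subseteq M$ and $C\subseteq\mathcal{U}\setminus M$, a complete formula over $BC$ is $\Xi(x,B,C)=\bigwedge R^{\epsilon(B_0,C_0)}(x,B_0,C_0)$ over all $B_0\subseteq B$, $C_0\subseteq C$ with $|B_0|+|C_0|=k-1$, $\epsilon(B_0,C_0)\in\{1,-1\}$, $R^1=R$, $R^{-1}=\neg R$; $\Xi_B$ is the subconjunction with $C_0=\emptyset$. Let $\mathbb{S}_C=\prod_{C_0\subseteq C,1\le|C_0|\le k-2}S^{\flat}_{\{x\}\cup\bar z_{C_0}}$ with fresh variables $\bar z_{C_0}$; $\bar q=(q_{C_0})$; $\bar\lambda$ the product of the $\lambda$-measures on $S^{\flat}_{\{x\}}\times\mathbb{S}_C$. For $C_0=\{c_1,\dots,c_{k-1}\}\subseteq C$, $(p,\mathring{\mathbf{q}}_{[C_0]})$ is the argument of $W$ obtained by identifying $[k]$ with $\{x,c_1,\dots,c_{k-1}\}$, assigning to $\{x\}$ the type $p$, to nonempty $D\subseteq C_0$ the type $\operatorname{tp}^{\flat}(D)$, and to $\{x\}\cup D$ ($\emptyset\ne D\subsetneq C_0$) the type $q_D$. With $W^1=W$,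 $W^{-1}=1-W$: $\mu_W(\Xi)=\int_{p\in S^{\flat}_{\{x\}}}\int_{\bar q\in\mathbb{S}_C}\mathbf{1}_{\Xi_B}(p)\prod_{C_0\subseteq C,1\le|C_0|\le k-2}\prod_{B_0\subseteq B,|B_0|=k-1-|C_0|}\mathbf{1}[R^{\epsilon(B_0,C_0)}(x,B_0,\bar z_{C_0})\in q_{C_0}]\prod_{C_0\subseteq C,|C_0|=k-1}W^{\epsilon(\emptyset,C_0)}(p,\mathring{\mathbf{q}}_{[C_0]})\,d\bar\lambda$. Finite sets get measure $0$ and $\mu_W$ is extended additively; this gives an $M$-invariant Keisler measure on $\mathcal{L}_x(\mathcal{U})$, so the map in the claim is well defined. *)

theory Defs
  imports "HOL-Probability.Probability"
begin

definition ksubsets :: "'a set \<Rightarrow> nat \<Rightarrow> 'a set set" where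
  "ksubsets A m = {D. D \<subseteq> A \<and> finite D \<and> card D = m}"

datatype 'a htm = HVar nat | HPar 'a

datatype 'a hfm =
    HRel "'a htm list"
  | HEq "'a htm" "'a htm"
  | HNeg "'a hfm"
  | HConj "'a hfm" "'a hfm"
  | HEx nat "'a hfm"

fun tval :: "(nat \<Rightarrow> 'a) \<Rightarrow> 'a htm \<Rightarrow> 'a" where
  "tval e (HVar i) = e i"
| "tval e (HPar a) = a"

fun tfv :: "'a htm \<Rightarrow> nat set" where
  "tfv (HVar i) = {i}"
| "tfv (HPar a) = {}"

fun tpar :: "'a htm \<Rightarrow> 'a set" where
  "tpar (HVar i) = {}"
| "tpar (HPar a) = {a}"

fun hfv :: "'a hfm \<Rightarrow> nat set" where
  "hfv (HRel ts) = (\<Union>t\<in>set ts. tfv t)"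
| "hfv (HEq s t) = tfv s \<union> tfv t"
| "hfv (HNeg \<phi>) = hfv \<phi>"
| "hfv (HConj \<phi> \<psi>) = hfv \<phi> \<union> hfv \<psi>"
| "hfv (HEx i \<phi>) = hfv \<phi> - {i}"

fun hpar :: "'a hfm \<Rightarrow> 'a set" where
  "hpar (HRel ts) = (\<Union>t\<in>set ts. tpar t)"
| "hpar (HEq s t) = tpar s \<union> tpar t"
| "hpar (HNeg \<phi>) = hpar \<phi>"
| "hpar (HConj \<phi> \<psi>) = hpar \<phi> \<union> hpar \<psi>"
| "hpar (HEx i \<phi>) = hpar \<phi>"

fun hwf :: "nat \<Rightarrow> 'a hfm \<Rightarrow> bool" where
  "hwf k (HRel ts) = (length ts = k)"
| "hwf k (HEq s t) = True"
| "hwf k (HNeg \<phi>) = hwf k \<phi>"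
| "hwf k (HConj \<phi> \<psi>) = (hwf k \<phi> \<and> hwf k \<psi>)"
| "hwf k (HEx i \<phi>) = hwf k \<phi>"

text \<open>Satisfaction in the k-uniform hypergraph with vertex set U and edge set E
  (a set of k-element subsets of U); R(t1..tk) holds iff the values form an edge
  (so R is symmetric and false on tuples with repetitions).\<close>
fun hsat :: "nat \<Rightarrow> 'a set \<Rightarrow> 'a set set \<Rightarrow> (nat \<Rightarrow> 'a) \<Rightarrow> 'a hfm \<Rightarrow> bool" where
  "hsat k U E e (HRel ts) = (length ts = k \<and> set (map (tval e) ts) \<in> E)"
| "hsat k U E e (HEq s t) = (tval e s = tval e t)"
| "hsat k U E e (HNeg \<phi>) = (\<not> hsat k U E e \<phi>)"
| "hsat k U E e (HConj \<phi> \<psi>) = (hsat k U E e \<phi> \<and> hsat k U E e \<psi>)"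
| "hsat k U E e (HEx i \<phi>) = (\<exists>a\<in>U. hsat k U E (e(i := a)) \<phi>)"

text \<open>Models of T_k: k-uniform hypergraphs satisfying all extension axioms.\<close>
definition model_Tk :: "nat \<Rightarrow> 'a set \<Rightarrow> 'a set set \<Rightarrow> bool" where
  "model_Tk k U E \<longleftrightarrow> U \<noteq> {} \<and> E \<subseteq> ksubsets U k \<and>
     (\<forall>A \<A>. finite A \<and> A \<subseteq> U \<and> \<A> \<subseteq> ksubsets A (k - 1) \<longrightarrow>
        (\<exists>x\<in>U - A. \<forall>S\<in>ksubsets A (k - 1). (insert x S \<in> E) \<longleftrightarrow> S \<in> \<A>))"

definition induced_edges :: "'a set set \<Rightarrow> 'a set \<Rightarrow> 'a set set" where
  "induced_edges E M = {S\<in>E. S \<subseteq> M}"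

definition elem_sub :: "nat \<Rightarrow> 'a set \<Rightarrow> 'a set set \<Rightarrow> 'a set \<Rightarrow> bool" where
  "elem_sub k U E M \<longleftrightarrow> M \<noteq> {} \<and> M \<subseteq> U \<and>
     (\<forall>\<phi> e. hpar \<phi> \<subseteq> M \<and> (\<forall>i. e i \<in> M) \<longrightarrow>
        (hsat k M (induced_edges E M) e \<phi> \<longleftrightarrow> hsat k U E e \<phi>))"

definition aleph1_saturated :: "nat \<Rightarrow> 'a set \<Rightarrow> 'a set set \<Rightarrow> bool" where
  "aleph1_saturated k U E \<longleftrightarrow>
     (\<forall>A \<Sigma>. countable A \<and> A \<subseteq> U \<and> (\<forall>\<psi>\<in>\<Sigma>. hpar \<psi> \<subseteq> A \<and> hfv \<psi> \<subseteq> {0}) \<and>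
        (\<forall>F. F \<subseteq> \<Sigma> \<and> finite F \<longrightarrow> (\<exists>a\<in>U. \<forall>\<psi>\<in>F. hsat k U E (\<lambda>_. a) \<psi>)) \<longrightarrow>
        (\<exists>a\<in>U. \<forall>\<psi>\<in>\<Sigma>. hsat k U E (\<lambda>_. a) \<psi>))"

definition LM :: "'a set \<Rightarrow> nat set \<Rightarrow> 'a hfm set" where
  "LM M V = {\<psi>. hpar \<psi> \<subseteq> M \<and> hfv \<psi> \<subseteq> V}"

definition types :: "nat \<Rightarrow> 'a set \<Rightarrow> 'a set set \<Rightarrow> nat \<Rightarrow> 'a hfm set set" where
  "types k M E n = {p. p \<subseteq> LM M {1..n} \<and>
      (\<forall>\<psi>\<in>LM M {1..n}. \<psi> \<in> p \<or> HNeg \<psi> \<in> p) \<and>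
      (\<forall>F. F \<subseteq> p \<and> finite F \<longrightarrow>
          (\<exists>e. (\<forall>i. e i \<in> M) \<and> (\<forall>\<psi>\<in>F. hsat k M (induced_edges E M) e \<psi>)))}"

definition stone_basic :: "nat \<Rightarrow> 'a set \<Rightarrow> 'a set set \<Rightarrow> nat \<Rightarrow> 'a hfm \<Rightarrow> 'a hfm set set" where
  "stone_basic k M E n \<psi> = {p\<in>types k M E n. \<psi> \<in> p}"

definition stone_open :: "nat \<Rightarrow> 'a set \<Rightarrow> 'a set set \<Rightarrow> nat \<Rightarrow> 'a hfm set set set" where
  "stone_open k M E n = {\<Union>F | F. F \<subseteq> stone_basic k M E n ` LM M {1..n}}"

definition stone_borel :: "nat \<Rightarrow> 'a set \<Rightarrow> 'a set set \<Rightarrow> nat \<Rightarrow> 'a hfm set measure" where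
  "stone_borel k M E n = sigma (types k M E n) (stone_open k M E n)"

text \<open>environment: variable 0 is x, variable i (1 <= i <= n) is the i-th entry of bs\<close>
definition benv :: "'a \<Rightarrow> 'a list \<Rightarrow> nat \<Rightarrow> 'a" where
  "benv a bs i = (if i = 0 then a else bs ! (i - 1))"

definition tp :: "nat \<Rightarrow> 'a set \<Rightarrow> 'a set set \<Rightarrow> 'a set \<Rightarrow> 'a list \<Rightarrow> 'a hfm set" where
  "tp k U E M bs = {\<psi>\<in>LM M {1..length bs}. hsat k U E (benv undefined bs) \<psi>}"

text \<open>A complete R-type in j variables over M is a truth assignment to the formulas
  R(x_I, D), D a (k-j)-subset of M; lambda is the fair coin product measure.\<close>
definition lam :: "nat \<Rightarrow> 'a set \<Rightarrow> nat \<Rightarrow> ('a set \<Rightarrow> bool) measure" where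
  "lam k M j = PiM (ksubsets M (k - j)) (\<lambda>_. measure_pmf (bernoulli_pmf (1/2)))"

definition unit_leb :: "real measure" where
  "unit_leb = restrict_space lborel {0..1}"

definition measure_iso :: "'b measure \<Rightarrow> 'c measure \<Rightarrow> ('b \<Rightarrow> 'c) \<Rightarrow> bool" where
  "measure_iso A B f \<longleftrightarrow> f \<in> A \<rightarrow>\<^sub>M B \<and> distr A B f = B \<and>
     (\<exists>h\<in>B \<rightarrow>\<^sub>M A. distr B A h = A \<and> (AE x in A. h (f x) = x) \<and> (AE y in B. f (h y) = y))"

definition Ik :: "nat \<Rightarrow> nat set set" where
  "Ik k = {I. I \<subseteq> {1..k} \<and> 1 \<le> card I \<and> card I \<le> k - 1}"

definition hg_space :: "nat \<Rightarrow> (nat set \<Rightarrow> real) measure" where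
  "hg_space k = PiM (Ik k) (\<lambda>_. unit_leb)"

definition borel_hypergraphon :: "nat \<Rightarrow> ((nat set \<Rightarrow> real) \<Rightarrow> real) \<Rightarrow> bool" where
  "borel_hypergraphon k W \<longleftrightarrow> W \<in> borel_measurable (hg_space k) \<and>
     (\<forall>t\<in>space (hg_space k). 0 \<le> W t \<and> W t \<le> 1) \<and>
     (\<forall>\<sigma> t. bij_betw \<sigma> {1..k} {1..k} \<and> t \<in> space (hg_space k) \<longrightarrow>
        W (\<lambda>I\<in>Ik k. t (\<sigma> ` I)) = W t)"

definition tpflat :: "nat \<Rightarrow> 'a set set \<Rightarrow> 'a set \<Rightarrow> 'a set \<Rightarrow> ('a set \<Rightarrow> bool)" where
  "tpflat k E M D = (\<lambda>F\<in>ksubsets M (k - card D). D \<union> F \<in> E)"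

text \<open>The argument (p, q_[C0]) of W, identifying [k] with {x, c_1, ..., c_(k-1)}
  via 1 |-> x and an enumeration of C0 by {2..k}.\<close>
definition Warg :: "nat \<Rightarrow> 'a set set \<Rightarrow> 'a set \<Rightarrow> (nat \<Rightarrow> ('a set \<Rightarrow> bool) \<Rightarrow> real)
    \<Rightarrow> ('a set \<Rightarrow> bool) \<Rightarrow> ('a set \<Rightarrow> 'a set \<Rightarrow> bool) \<Rightarrow> 'a set \<Rightarrow> (nat set \<Rightarrow> real)" where
  "Warg k E M isos p q C0 =
     (let g = (SOME g. bij_betw g {2..k} C0) in
      (\<lambda>I\<in>Ik k. if I = {1} then isos 1 p
                 else if 1 \<in> I then isos (card I) (q (g ` (I - {1})))
                 else isos (card I) (tpflat k E M (g ` I))))"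

definition sgnW :: "bool \<Rightarrow> real \<Rightarrow> real" where
  "sgnW b w = (if b then w else 1 - w)"

text \<open>mu_W of the complete formula Xi determined by eps over the finite parameter set A
  (B = A inter M, C = A - M).\<close>
definition muXi :: "nat \<Rightarrow> 'a set set \<Rightarrow> 'a set \<Rightarrow> (nat \<Rightarrow> ('a set \<Rightarrow> bool) \<Rightarrow> real)
    \<Rightarrow> ((nat set \<Rightarrow> real) \<Rightarrow> real) \<Rightarrow> 'a set \<Rightarrow> ('a set \<Rightarrow> bool) \<Rightarrow> real" where
  "muXi k E M isos W A \<epsilon> =
     (let B = A \<inter> M; C = A - M;
          Cs = {C0. C0 \<subseteq> C \<and> 1 \<le> card C0 \<and> card C0 \<le> k - 2}
      in integral\<^sup>L (lam k M 1 \<Otimes>\<^sub>M PiM Cs (\<lambda>C0. lam k M (1 + card C0)))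
           (\<lambda>(p, q). of_bool (\<forall>B0\<in>ksubsets B (k - 1). p B0 = \<epsilon> B0)
              * (\<Prod>C0\<in>Cs. \<Prod>B0\<in>ksubsets B (k - 1 - card C0). of_bool (q C0 B0 = \<epsilon> (B0 \<union> C0)))
              * (\<Prod>C0\<in>ksubsets C (k - 1). sgnW (\<epsilon> C0) (W (Warg k E M isos p q C0)))))"

text \<open>mu_W(phi(x, bs)): sum of mu_W(Xi) over the complete formulas Xi over A = set bs
  whose realizations (outside the finite set A) lie in phi(U, bs).\<close>
definition muW :: "nat \<Rightarrow> 'a set \<Rightarrow> 'a set set \<Rightarrow> 'a set \<Rightarrow> (nat \<Rightarrow> ('a set \<Rightarrow> bool) \<Rightarrow> real)
    \<Rightarrow> ((nat set \<Rightarrow> real) \<Rightarrow> real) \<Rightarrow> 'a hfm \<Rightarrow> 'a list \<Rightarrow> real" where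
  "muW k U E M isos W \<phi> bs =
     (let A = set bs;
          Xi = (\<lambda>\<epsilon>. {a\<in>U - A. \<forall>S\<in>ksubsets A (k - 1). (insert a S \<in> E) = \<epsilon> S})
      in \<Sum>\<epsilon>\<in>{\<epsilon>\<in>PiE (ksubsets A (k - 1)) (\<lambda>_. UNIV).
                 Xi \<epsilon> \<subseteq> {a\<in>U. hsat k U E (benv a bs) \<phi>}}. muXi k E M isos W A \<epsilon>)"

end

theory Submission
  imports Defs
begin


definition CsS :: "nat \<Rightarrow> 'a set \<Rightarrow> 'a set set" where
 "CsS k C = {C0. C0 \<subseteq> C \<and> 1 \<le> card C0 \<and> card C0 \<le> k - 2}"

definition Nm :: "nat \<Rightarrow> 'a set \<Rightarrow> 'a set \<Rightarrow> (('a set \<Rightarrow> bool) \<times> ('a set \<Rightarrow> 'a set \<Rightarrow> bool)) measure" where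
 "Nm k M C = lam k M 1 \<Otimes>\<^sub>M PiM (CsS k C) (\<lambda>C0. lam k M (1 + card C0))"

definition WargG :: "nat \<Rightarrow> (nat \<Rightarrow> ('a set \<Rightarrow> bool) \<Rightarrow> real) \<Rightarrow> ('a set \<Rightarrow> ('a set \<Rightarrow> bool))
   \<Rightarrow> ('a set \<Rightarrow> bool) \<Rightarrow> ('a set \<Rightarrow> 'a set \<Rightarrow> bool) \<Rightarrow> 'a set \<Rightarrow> (nat set \<Rightarrow> real)" where
 "WargG k isos tf p q C0 = (let g = (SOME g. bij_betw g {2..k} C0) in
      (\<lambda>I\<in>Ik k. if I = {1} then isos 1 p
                 else if 1 \<in> I then isos (card I) (q (g ` (I - {1})))
                 else isos (card I) (tf (g ` I))))"

definition integ :: "nat \<Rightarrow> 'a set \<Rightarrow> (nat \<Rightarrow> ('a set \<Rightarrow> bool) \<Rightarrow> real) \<Rightarrow> ((nat set \<Rightarrow> real) \<Rightarrow> real)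
   \<Rightarrow> ('a set \<Rightarrow> ('a set \<Rightarrow> bool)) \<Rightarrow> 'a set \<Rightarrow> 'a set \<Rightarrow> ('a set \<Rightarrow> bool)
   \<Rightarrow> ('a set \<Rightarrow> bool) \<times> ('a set \<Rightarrow> 'a set \<Rightarrow> bool) \<Rightarrow> real" where
 "integ k M isos W tf B C \<epsilon> = (\<lambda>(p, q). of_bool (\<forall>B0\<in>ksubsets B (k - 1). p B0 = \<epsilon> B0)
              * (\<Prod>C0\<in>CsS k C. \<Prod>B0\<in>ksubsets B (k - 1 - card C0). of_bool (q C0 B0 = \<epsilon> (B0 \<union> C0)))
              * (\<Prod>C0\<in>ksubsets C (k - 1). sgnW (\<epsilon> C0) (W (WargG k isos tf p q C0))))"

lemma muXi_alt: "muXi k E M isos W A \<epsilon> = integral\<^sup>L (Nm k M (A - M)) (integ k M isos W (tpflat k E M) (A \<inter> M) (A - M) \<epsilon>)"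
  unfolding muXi_def Nm_def integ_def CsS_def WargG_def Warg_def Let_def by simp

lemma space_lam: "space (lam k M j) = PiE (ksubsets M (k - j)) (\<lambda>_. UNIV)"
  unfolding lam_def by (simp add: space_PiM)

lemma prob_space_lam: "prob_space (lam k M j)"
  unfolding lam_def by (intro prob_space_PiM prob_space_measure_pmf)

lemma lam_comp_meas: "F \<in> ksubsets M (k - j) \<Longrightarrow> (\<lambda>x. x F) \<in> lam k M j \<rightarrow>\<^sub>M count_space UNIV"
proof -
  assume F: "F \<in> ksubsets M (k - j)"
  have "(\<lambda>x. x F) \<in> lam k M j \<rightarrow>\<^sub>M measure_pmf (bernoulli_pmf (1/2))"
    unfolding lam_def by (rule measurable_component_singleton) (use F in simp)
  moreover have "lam k M j \<rightarrow>\<^sub>M measure_pmf (bernoulli_pmf (1/2)) = lam k M j \<rightarrow>\<^sub>M count_space UNIV"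
    by (rule measurable_cong_sets) auto
  ultimately show ?thesis by simp
qed

lemma tpflat_space: "tpflat k E M D \<in> space (lam k M (card D))"
  unfolding space_lam tpflat_def by auto

lemma Ik_props: "I \<in> Ik k \<Longrightarrow> I \<subseteq> {1..k} \<and> finite I \<and> 1 \<le> card I \<and> card I \<le> k - 1"
  unfolding Ik_def by (auto intro: finite_subset)

lemma exists_enum:
  assumes "C0 \<in> ksubsets C (k - 1)" "k > 2"
  shows "bij_betw (SOME g. bij_betw g {2..k} C0) {2..k} C0"
proof -
  have "finite C0" "card C0 = k - 1" using assms unfolding ksubsets_def by auto
  moreover have "card {2..k} = k - 1" by simp
  ultimately obtain g where "bij_betw g {2..k} C0"
    using finite_same_card_bij[of "{2..k}" C0] by auto
  then show ?thesis by (metis someI)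
qed

lemma fst_snd_meas_Nm: "(\<lambda>x. fst (snd x)) \<in> P \<Otimes>\<^sub>M Nm k M C \<rightarrow>\<^sub>M lam k M 1"
  unfolding Nm_def by measurable

lemma snd_snd_meas_Nm: "(\<lambda>x. snd (snd x)) \<in> P \<Otimes>\<^sub>M Nm k M C \<rightarrow>\<^sub>M PiM (CsS k C) (\<lambda>C0. lam k M (1 + card C0))"
  unfolding Nm_def by measurable

lemma WargG_meas:
  assumes k: "k > 2" and C0: "C0 \<in> ksubsets C (k - 1)"
    and isos: "\<forall>j\<in>{1..k - 1}. isos j \<in> lam k M j \<rightarrow>\<^sub>M unit_leb"
    and tf: "\<And>D. D \<subseteq> C \<Longrightarrow> D \<noteq> {} \<Longrightarrow> card D \<le> k - 1 \<Longrightarrow> (\<lambda>\<omega>. tf \<omega> D) \<in> P \<rightarrow>\<^sub>M lam k M (card D)"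
  shows "(\<lambda>x. WargG k isos (tf (fst x)) (fst (snd x)) (snd (snd x)) C0) \<in> P \<Otimes>\<^sub>M Nm k M C \<rightarrow>\<^sub>M hg_space k"
proof -
  define g where "g = (SOME g. bij_betw g {2..k} C0)"
  have g: "bij_betw g {2..k} C0" unfolding g_def by (rule exists_enum[OF C0 k])
  have C0C: "C0 \<subseteq> C" using C0 unfolding ksubsets_def by auto
  show ?thesis
    unfolding WargG_def Let_def hg_space_def g_def[symmetric]
  proof (rule measurable_restrict)
    fix I assume I: "I \<in> Ik k"
    note Ip = Ik_props[OF I]
    show "(\<lambda>x. if I = {1} then isos 1 (fst (snd x))
              else if 1 \<in> I then isos (card I) (snd (snd x) (g ` (I - {1})))
              else isos (card I) (tf (fst x) (g ` I))) \<in> P \<Otimes>\<^sub>M Nm k M C \<rightarrow>\<^sub>M unit_leb"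
    proof (cases "I = {1}")
      case True
      have "isos 1 \<in> lam k M 1 \<rightarrow>\<^sub>M unit_leb" using isos k by auto
      then show ?thesis using True measurable_compose[OF fst_snd_meas_Nm] by simp
    next
      case False
      have cI: "card I \<in> {1..k - 1}" using Ip by auto
      then have iso: "isos (card I) \<in> lam k M (card I) \<rightarrow>\<^sub>M unit_leb" using isos by auto
      show ?thesis
      proof (cases "1 \<in> I")
        case True
        let ?D = "g ` (I - {1})"
        have sub: "I - {1} \<subseteq> {2..k}" using Ip by auto
        have inj: "inj_on g (I - {1})" using g sub unfolding bij_betw_def by (auto intro: inj_on_subset)
        have cD: "card ?D = card I - 1" using card_image[OF inj] Ip True by auto
        have "I - {1} \<noteq> {}" using False True by auto
        then have "card (I - {1}) \<ge> 1" using Ip by (simp add: Suc_leI card_gt_0_iff)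
        then have D: "?D \<in> CsS k C" using cD Ip g sub C0C card_image[OF inj] unfolding CsS_def bij_betw_def
          by auto
        have "(\<lambda>x. snd (snd x) ?D) \<in> P \<Otimes>\<^sub>M Nm k M C \<rightarrow>\<^sub>M lam k M (1 + card ?D)"
          by (rule measurable_compose[OF snd_snd_meas_Nm measurable_component_singleton[OF D]])
        moreover have "1 + card ?D = card I" using cD Ip by auto
        ultimately have "(\<lambda>x. snd (snd x) ?D) \<in> P \<Otimes>\<^sub>M Nm k M C \<rightarrow>\<^sub>M lam k M (card I)" by simp
        then show ?thesis using False True measurable_compose[OF _ iso] by simp
      next
        case n1: False
        let ?D = "g ` I"
        have sub: "I \<subseteq> {2..k}" using Ip n1 by (auto simp: subset_iff) (metis One_nat_def Suc_1 Suc_leI antisym_conv1 atLeastAtMost_iff)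
        have inj: "inj_on g I" using g sub unfolding bij_betw_def by (auto intro: inj_on_subset)
        have cD: "card ?D = card I" using card_image[OF inj] by auto
        have "?D \<subseteq> C" using g sub C0C unfolding bij_betw_def by auto
        moreover have "?D \<noteq> {}" using Ip by auto
        ultimately have "(\<lambda>\<omega>. tf \<omega> ?D) \<in> P \<rightarrow>\<^sub>M lam k M (card I)" using tf cD Ip by metis
        then have "(\<lambda>x. tf (fst x) ?D) \<in> P \<Otimes>\<^sub>M Nm k M C \<rightarrow>\<^sub>M lam k M (card I)"
          by (rule measurable_compose[OF measurable_fst])
        then show ?thesis using False n1 measurable_compose[OF _ iso] by simp
      qed
    qed
  qed
qed

lemma finite_ksubsets: "finite B \<Longrightarrow> finite (ksubsets B m)"
  unfolding ksubsets_def by (rule finite_subset[of _ "Pow B"]) auto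

lemma finite_CsS: "finite C \<Longrightarrow> finite (CsS k C)"
  unfolding CsS_def by (rule finite_subset[of _ "Pow C"]) auto

lemma ksubsets_mono: "B \<subseteq> M \<Longrightarrow> B0 \<in> ksubsets B m \<Longrightarrow> B0 \<in> ksubsets M m"
  unfolding ksubsets_def by auto

lemma integ_meas:
  assumes k: "k > 2" and C: "finite C" and B: "finite B" "B \<subseteq> M"
    and isos: "\<forall>j\<in>{1..k - 1}. isos j \<in> lam k M j \<rightarrow>\<^sub>M unit_leb"
    and tf: "\<And>D. D \<subseteq> C \<Longrightarrow> D \<noteq> {} \<Longrightarrow> card D \<le> k - 1 \<Longrightarrow> (\<lambda>\<omega>. tf \<omega> D) \<in> P \<rightarrow>\<^sub>M lam k M (card D)"
    and W: "W \<in> borel_measurable (hg_space k)"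
  shows "(\<lambda>x. integ k M isos W (tf (fst x)) B C \<epsilon> (snd x)) \<in> borel_measurable (P \<Otimes>\<^sub>M Nm k M C)"
proof -
  let ?N = "P \<Otimes>\<^sub>M Nm k M C"
  have f1: "(\<lambda>x. of_bool (\<forall>B0\<in>ksubsets B (k - 1). fst (snd x) B0 = \<epsilon> B0) :: real) \<in> borel_measurable ?N"
  proof (rule measurable_compose[OF _ measurable_of_bool])
    show "Measurable.pred ?N (\<lambda>x. \<forall>B0\<in>ksubsets B (k - 1). fst (snd x) B0 = \<epsilon> B0)"
    proof (rule pred_intros_finite(3))
      show "finite (ksubsets B (k - 1))" using B(1) by (rule finite_ksubsets)
      fix B0 assume "B0 \<in> ksubsets B (k - 1)"
      then have "B0 \<in> ksubsets M (k - 1)" using B ksubsets_mono by blast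
      then have "(\<lambda>y. y B0) \<in> lam k M 1 \<rightarrow>\<^sub>M count_space UNIV" using lam_comp_meas by fastforce
      then have "(\<lambda>x. fst (snd x) B0) \<in> ?N \<rightarrow>\<^sub>M count_space UNIV"
        by (rule measurable_compose[OF fst_snd_meas_Nm])
      then show "Measurable.pred ?N (\<lambda>x. fst (snd x) B0 = \<epsilon> B0)" by (rule pred_eq_const1) simp
    qed
  qed
  have f2: "(\<lambda>x. (\<Prod>C0\<in>CsS k C. \<Prod>B0\<in>ksubsets B (k - 1 - card C0). of_bool (snd (snd x) C0 B0 = \<epsilon> (B0 \<union> C0))) :: real) \<in> borel_measurable ?N"
  proof (intro borel_measurable_prod)
    fix C0 B0 assume C0: "C0 \<in> CsS k C" and B0: "B0 \<in> ksubsets B (k - 1 - card C0)"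
    have "B0 \<in> ksubsets M (k - (1 + card C0))" using B ksubsets_mono B0 by (metis diff_diff_left)
    then have "(\<lambda>y. y B0) \<in> lam k M (1 + card C0) \<rightarrow>\<^sub>M count_space UNIV" by (rule lam_comp_meas)
    then have "(\<lambda>x. snd (snd x) C0 B0) \<in> ?N \<rightarrow>\<^sub>M count_space UNIV"
      by (rule measurable_compose[OF measurable_compose[OF snd_snd_meas_Nm measurable_component_singleton[OF C0]]])
    then have "Measurable.pred ?N (\<lambda>x. snd (snd x) C0 B0 = \<epsilon> (B0 \<union> C0))" by (rule pred_eq_const1) simp
    then show "(\<lambda>x. of_bool (snd (snd x) C0 B0 = \<epsilon> (B0 \<union> C0)) :: real) \<in> borel_measurable ?N"
      by (rule measurable_compose[OF _ measurable_of_bool])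
  qed
  have f3: "(\<lambda>x. \<Prod>C0\<in>ksubsets C (k - 1). sgnW (\<epsilon> C0) (W (WargG k isos (tf (fst x)) (fst (snd x)) (snd (snd x)) C0))) \<in> borel_measurable ?N"
  proof (intro borel_measurable_prod)
    fix C0 assume C0: "C0 \<in> ksubsets C (k - 1)"
    have "(\<lambda>x. W (WargG k isos (tf (fst x)) (fst (snd x)) (snd (snd x)) C0)) \<in> borel_measurable ?N"
      by (rule measurable_compose[OF WargG_meas[OF k C0 isos tf] W])
    then show "(\<lambda>x. sgnW (\<epsilon> C0) (W (WargG k isos (tf (fst x)) (fst (snd x)) (snd (snd x)) C0))) \<in> borel_measurable ?N"
      unfolding sgnW_def by (cases "\<epsilon> C0") auto
  qed
  show ?thesis unfolding integ_def case_prod_beta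
    using f1 f2 f3 by (intro borel_measurable_times) auto
qed


lemma bij_image_subsets:
  assumes b: "bij_betw \<rho> A' A"
  shows "bij_betw ((`) \<rho>) {X. X \<subseteq> A' \<and> Q (finite X) (card X)} {X. X \<subseteq> A \<and> Q (finite X) (card X)}"
proof (rule bij_betw_subset[OF bij_betw_Pow[OF b]])
  show "{X. X \<subseteq> A' \<and> Q (finite X) (card X)} \<subseteq> Pow A'" by auto
  have inj: "inj_on \<rho> A'" using b by (rule bij_betw_imp_inj_on)
  have im: "\<rho> ` A' = A" using b by (simp add: bij_betw_def)
  have fc: "finite (\<rho> ` X) = finite X \<and> card (\<rho> ` X) = card X" if "X \<subseteq> A'" for X
    using inj_on_subset[OF inj that] finite_image_iff card_image by blast
  show "(`) \<rho> ` {X. X \<subseteq> A' \<and> Q (finite X) (card X)} = {X. X \<subseteq> A \<and> Q (finite X) (card X)}"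
  proof (intro equalityI subsetI)
    fix Y assume "Y \<in> (`) \<rho> ` {X. X \<subseteq> A' \<and> Q (finite X) (card X)}"
    then obtain X where X: "X \<subseteq> A'" "Q (finite X) (card X)" "Y = \<rho> ` X" by auto
    then show "Y \<in> {X. X \<subseteq> A \<and> Q (finite X) (card X)}" using fc[OF X(1)] im by auto
  next
    fix Y assume Y: "Y \<in> {X. X \<subseteq> A \<and> Q (finite X) (card X)}"
    define X where "X = A' \<inter> \<rho> -` Y"
    have "\<rho> ` X = Y" using Y im unfolding X_def by auto
    moreover have "X \<subseteq> A'" unfolding X_def by auto
    ultimately show "Y \<in> (`) \<rho> ` {X. X \<subseteq> A' \<and> Q (finite X) (card X)}" using fc Y by force
  qed
qed

lemma bij_CsS: "bij_betw \<rho> A' A \<Longrightarrow> bij_betw ((`) \<rho>) (CsS k A') (CsS k A)"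
  unfolding CsS_def using bij_image_subsets[where Q="\<lambda>f c. 1 \<le> c \<and> c \<le> k - 2"] by simp

lemma bij_ksubsets: "bij_betw \<rho> A' A \<Longrightarrow> bij_betw ((`) \<rho>) (ksubsets A' m) (ksubsets A m)"
  unfolding ksubsets_def using bij_image_subsets[where Q="\<lambda>f c. f \<and> c = m"] by blast

lemma Ik_enum_facts:
  assumes g: "bij_betw g {2..k} C0" and I: "I \<in> Ik k"
  shows "card I \<in> {1..k - 1}"
    and "1 \<in> I \<Longrightarrow> I \<noteq> {1} \<Longrightarrow> g ` (I - {1}) \<subseteq> C0 \<and> g ` (I - {1}) \<noteq> {} \<and> card (g ` (I - {1})) = card I - 1
           \<and> 1 \<le> card (g ` (I - {1})) \<and> card (g ` (I - {1})) \<le> k - 2"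
    and "1 \<notin> I \<Longrightarrow> g ` I \<subseteq> C0 \<and> g ` I \<noteq> {} \<and> card (g ` I) = card I"
proof -
  note Ip = Ik_props[OF I]
  show "card I \<in> {1..k - 1}" using Ip by auto
  show "1 \<in> I \<Longrightarrow> I \<noteq> {1} \<Longrightarrow> g ` (I - {1}) \<subseteq> C0 \<and> g ` (I - {1}) \<noteq> {} \<and> card (g ` (I - {1})) = card I - 1
           \<and> 1 \<le> card (g ` (I - {1})) \<and> card (g ` (I - {1})) \<le> k - 2"
  proof -
    assume T: "1 \<in> I" and F: "I \<noteq> {1}"
    have sub: "I - {1} \<subseteq> {2..k}" using Ip by auto
    have inj: "inj_on g (I - {1})" using g sub unfolding bij_betw_def by (auto intro: inj_on_subset)
    have cD: "card (g ` (I - {1})) = card I - 1" using card_image[OF inj] Ip T by auto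
    have ne: "I - {1} \<noteq> {}" using F T by auto
    then have "card (I - {1}) \<ge> 1" using Ip by (simp add: Suc_leI card_gt_0_iff)
    then show ?thesis using cD Ip g sub ne card_image[OF inj] unfolding bij_betw_def by auto
  qed
  show "1 \<notin> I \<Longrightarrow> g ` I \<subseteq> C0 \<and> g ` I \<noteq> {} \<and> card (g ` I) = card I"
  proof -
    assume n1: "1 \<notin> I"
    have sub: "I \<subseteq> {2..k}" using Ip n1 by (auto simp: subset_iff) (metis One_nat_def Suc_1 Suc_leI antisym_conv1 atLeastAtMost_iff)
    have inj: "inj_on g I" using g sub unfolding bij_betw_def by (auto intro: inj_on_subset)
    show ?thesis using card_image[OF inj] g sub Ip unfolding bij_betw_def by auto
  qed
qed

lemma space_hg: "space (hg_space k) = PiE (Ik k) (\<lambda>_. {0..1})"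
  unfolding hg_space_def unit_leb_def by (simp add: space_PiM space_restrict_space)

lemma WargG_space:
  assumes k: "k > 2" and C0: "C0 \<in> ksubsets C (k - 1)"
    and isos: "\<forall>j\<in>{1..k - 1}. isos j \<in> lam k M j \<rightarrow>\<^sub>M unit_leb"
    and x: "x \<in> space (lam k M 1)"
    and q: "\<And>D. D \<subseteq> C0 \<Longrightarrow> D \<noteq> {} \<Longrightarrow> card D \<le> k - 2 \<Longrightarrow> q D \<in> space (lam k M (1 + card D))"
    and tf: "\<And>D. D \<subseteq> C0 \<Longrightarrow> D \<noteq> {} \<Longrightarrow> tf D \<in> space (lam k M (card D))"
  shows "WargG k isos tf x q C0 \<in> space (hg_space k)"
proof -
  define g where "g = (SOME g. bij_betw g {2..k} C0)"
  have g: "bij_betw g {2..k} C0" unfolding g_def by (rule exists_enum[OF C0 k])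
  have sp: "isos j y \<in> {0..1}" if "j \<in> {1..k - 1}" "y \<in> space (lam k M j)" for j y
    using measurable_space[of "isos j" "lam k M j" unit_leb y] isos that
    unfolding unit_leb_def by (auto simp: space_restrict_space)
  show ?thesis unfolding space_hg WargG_def Let_def g_def[symmetric]
  proof (rule restrict_PiE_iff[THEN iffD2], intro ballI)
    fix I assume I: "I \<in> Ik k"
    note F = Ik_enum_facts[OF g I]
    show "(if I = {1} then isos 1 x else if 1 \<in> I then isos (card I) (q (g ` (I - {1}))) else isos (card I) (tf (g ` I))) \<in> {0..1}"
    proof (cases "I = {1}")
      case True then show ?thesis using sp[OF _ x] k by simp
    next
      case False
      show ?thesis
      proof (cases "1 \<in> I")
        case True
        note D = F(2)[OF True False]
        have "q (g ` (I - {1})) \<in> space (lam k M (card I))"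
          using q[of "g ` (I - {1})"] D F(1) by auto
        then show ?thesis using sp F(1) True False by simp
      next
        case n1: False
        note D = F(3)[OF n1]
        have "tf (g ` I) \<in> space (lam k M (card I))" using tf[of "g ` I"] D by auto
        then show ?thesis using sp F(1) n1 False by simp
      qed
    qed
  qed
qed

lemma WargG_rename:
  assumes k: "k > 2" and C0': "C0' \<in> ksubsets C' (k - 1)" and inj: "inj_on \<rho> C0'"
    and Wsym: "\<And>\<sigma> t. bij_betw \<sigma> {1..k} {1..k} \<Longrightarrow> t \<in> space (hg_space k) \<Longrightarrow> W (\<lambda>I\<in>Ik k. t (\<sigma> ` I)) = W t"
    and tf': "\<And>D'. D' \<subseteq> C0' \<Longrightarrow> D' \<noteq> {} \<Longrightarrow> tf' D' = tf (\<rho> ` D')"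
    and q': "\<And>D'. D' \<subseteq> C0' \<Longrightarrow> D' \<noteq> {} \<Longrightarrow> card D' \<le> k - 2 \<Longrightarrow> q' D' = q (\<rho> ` D')"
    and sp: "WargG k isos tf x q (\<rho> ` C0') \<in> space (hg_space k)"
  shows "W (WargG k isos tf' x q' C0') = W (WargG k isos tf x q (\<rho> ` C0'))"
proof -
  define h where "h = (SOME g. bij_betw g {2..k} C0')"
  have h: "bij_betw h {2..k} C0'" unfolding h_def by (rule exists_enum[OF C0' k])
  have "\<rho> ` C0' \<in> ksubsets (\<rho> ` C0') (k - 1)"
    using C0' card_image[OF inj] unfolding ksubsets_def by auto
  define g where "g = (SOME g. bij_betw g {2..k} (\<rho> ` C0'))"
  have g: "bij_betw g {2..k} (\<rho> ` C0')" unfolding g_def by (rule exists_enum[OF \<open>\<rho> ` C0' \<in> _\<close> k])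
  define \<tau> where "\<tau> = (\<lambda>i. if i \<in> {2..k} then inv_into {2..k} g (\<rho> (h i)) else i)"
  have b1: "bij_betw (inv_into {2..k} g \<circ> \<rho> \<circ> h) {2..k} {2..k}"
  proof -
    have "bij_betw \<rho> C0' (\<rho> ` C0')" by (simp add: bij_betw_imageI inj)
    from bij_betw_trans[OF h bij_betw_trans[OF this bij_betw_inv_into[OF g]]] show ?thesis by (simp add: comp_assoc)
  qed
  have b2: "bij_betw \<tau> {2..k} {2..k}"
    by (rule bij_betw_cong[THEN iffD1, OF _ b1]) (simp add: \<tau>_def)
  have b3: "bij_betw \<tau> {1} {1}" by (simp add: \<tau>_def bij_betw_def)
  have sig: "bij_betw \<tau> {1..k} {1..k}"
  proof -
    have "{1..k} = {1} \<union> {2..k}" using k by auto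
    then show ?thesis using bij_betw_combine[OF b3 b2] by simp
  qed
  have gt: "g (\<tau> i) = \<rho> (h i)" if "i \<in> {2..k}" for i
  proof -
    have "\<rho> (h i) \<in> g ` {2..k}" using g h that unfolding bij_betw_def by auto
    then show ?thesis unfolding \<tau>_def using that by (simp add: f_inv_into_f)
  qed
  have gtJ: "g ` (\<tau> ` J) = \<rho> ` (h ` J)" if "J \<subseteq> {2..k}" for J
    using gt that by (force simp: image_image)
  have t1: "\<tau> 1 = 1" by (simp add: \<tau>_def)
  have tn1: "\<tau> i \<noteq> 1" if "i \<in> {2..k}" for i
  proof -
    have "\<tau> i \<in> {2..k}" using b2 that unfolding bij_betw_def by blast
    then show ?thesis by auto
  qed
  have injt: "inj_on \<tau> {1..k}" using sig by (rule bij_betw_imp_inj_on)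
  have eq: "WargG k isos tf' x q' C0' = (\<lambda>I\<in>Ik k. WargG k isos tf x q (\<rho> ` C0') (\<tau> ` I))"
  proof (rule ext)
    fix I
    show "WargG k isos tf' x q' C0' I = (\<lambda>I\<in>Ik k. WargG k isos tf x q (\<rho> ` C0') (\<tau> ` I)) I"
    proof (cases "I \<in> Ik k")
      case False then show ?thesis unfolding WargG_def Let_def by simp
    next
      case I: True
      note Ip = Ik_props[OF I]
      have cI: "card (\<tau> ` I) = card I" using card_image inj_on_subset[OF injt] Ip by metis
      have sI: "\<tau> ` I \<subseteq> {1..k}" using sig Ip unfolding bij_betw_def by auto
      have tI: "\<tau> ` I \<in> Ik k" using cI sI Ip unfolding Ik_def by auto
      have one: "1 \<in> \<tau> ` I \<longleftrightarrow> 1 \<in> I"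
      proof
        assume "1 \<in> \<tau> ` I"
        then obtain i where "i \<in> I" "\<tau> i = 1" by auto
        then show "1 \<in> I" using tn1 Ip by (metis atLeastAtMost_iff le_antisym not_less_eq_eq numeral_2_eq_2 subsetD Suc_1 One_nat_def)
      qed (use t1 in force)
      have s1: "\<tau> ` I = {1} \<longleftrightarrow> I = {1}"
      proof
        assume a: "\<tau> ` I = {1}"
        then have "card I = 1" using cI by simp
        moreover have "1 \<in> I" using one a by auto
        ultimately show "I = {1}" using Ip by (metis card_1_singletonE singletonD)
      qed (use t1 in simp)
      have m1: "\<tau> ` I - {1} = \<tau> ` (I - {1})"
      proof -
        have "\<tau> ` (I - {1}) = \<tau> ` I - \<tau> ` {1}"
          by (rule inj_on_image_set_diff[OF injt]) (use Ip k in auto)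
        then show ?thesis using t1 by simp
      qed
      show ?thesis
      proof (cases "I = {1}")
        case True then show ?thesis using I tI s1 unfolding WargG_def Let_def h_def[symmetric] g_def[symmetric] by simp
      next
        case F: False
        show ?thesis
        proof (cases "1 \<in> I")
          case True
          note D = Ik_enum_facts(2)[OF h I True F]
          have sub: "I - {1} \<subseteq> {2..k}" using Ip by auto
          have "q' (h ` (I - {1})) = q (\<rho> ` h ` (I - {1}))" using q' D by auto
          also have "\<rho> ` h ` (I - {1}) = g ` (\<tau> ` I - {1})" using gtJ[OF sub] m1 by simp
          finally show ?thesis using I tI s1 one F True cI
            unfolding WargG_def Let_def h_def[symmetric] g_def[symmetric] by simp
        next
          case n1: False
          note D = Ik_enum_facts(3)[OF h I n1]
          have sub: "I \<subseteq> {2..k}" using Ip n1 by (auto simp: subset_iff) (metis One_nat_def Suc_1 Suc_leI antisym_conv1 atLeastAtMost_iff)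
          have "tf' (h ` I) = tf (\<rho> ` h ` I)" using tf' D by auto
          also have "\<rho> ` h ` I = g ` (\<tau> ` I)" using gtJ[OF sub] by simp
          finally show ?thesis using I tI s1 one F n1 cI
            unfolding WargG_def Let_def h_def[symmetric] g_def[symmetric] by simp
        qed
      qed
    qed
  qed
  show ?thesis unfolding eq using Wsym[OF sig sp] by simp
qed


lemma integ_meas0:
  assumes k: "k > 2" and C: "finite C" and B: "finite B" "B \<subseteq> M"
    and isos: "\<forall>j\<in>{1..k - 1}. isos j \<in> lam k M j \<rightarrow>\<^sub>M unit_leb"
    and tf0: "\<And>D. D \<subseteq> C \<Longrightarrow> D \<noteq> {} \<Longrightarrow> card D \<le> k - 1 \<Longrightarrow> tf0 D \<in> space (lam k M (card D))"
    and W: "W \<in> borel_measurable (hg_space k)"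
  shows "integ k M isos W tf0 B C \<epsilon> \<in> borel_measurable (Nm k M C)"
proof -
  let ?P = "count_space (UNIV :: unit set)"
  have "(\<lambda>x. integ k M isos W ((\<lambda>\<omega>. tf0) (fst x)) B C \<epsilon> (snd x)) \<in> borel_measurable (?P \<Otimes>\<^sub>M Nm k M C)"
    by (rule integ_meas[OF k C B isos _ W]) (use tf0 in auto)
  moreover have "(\<lambda>xq. ((), xq)) \<in> Nm k M C \<rightarrow>\<^sub>M ?P \<Otimes>\<^sub>M Nm k M C"
    by (rule measurable_Pair[OF measurable_const measurable_ident_sets[OF refl]]) simp
  ultimately have "(\<lambda>xq. integ k M isos W ((\<lambda>\<omega>. tf0) (fst ((), xq))) B C \<epsilon> (snd ((), xq))) \<in> borel_measurable (Nm k M C)"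
    by (rule measurable_compose[rotated])
  then show ?thesis by simp
qed

lemma prob_space_Pi_lam: "prob_space (PiM I (\<lambda>C0. lam k M (f C0)))"
  by (intro prob_space_PiM prob_space_lam)

lemma muXi_rename:
  fixes \<rho> :: "'a \<Rightarrow> 'a"
  assumes k: "k > 2" and finA': "finite A'" and bij: "bij_betw \<rho> A' A"
    and fixM: "\<And>x. x \<in> A' \<Longrightarrow> x \<in> M \<Longrightarrow> \<rho> x = x"
    and outM: "\<And>x. x \<in> A' \<Longrightarrow> x \<notin> M \<Longrightarrow> \<rho> x \<notin> M"
    and eps: "\<And>S'. S' \<in> ksubsets A' (k - 1) \<Longrightarrow> \<epsilon>' S' = \<epsilon> (\<rho> ` S')"
    and tf: "\<And>D'. D' \<subseteq> A' - M \<Longrightarrow> D' \<noteq> {} \<Longrightarrow> card D' \<le> k - 1 \<Longrightarrow> tpflat k E' M D' = tpflat k E M (\<rho> ` D')"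
    and isos: "\<forall>j\<in>{1..k - 1}. isos j \<in> lam k M j \<rightarrow>\<^sub>M unit_leb"
    and W: "borel_hypergraphon k W"
  shows "muXi k E' M isos W A' \<epsilon>' = muXi k E M isos W A \<epsilon>"
proof -
  define B where "B = A' \<inter> M"
  define C' where "C' = A' - M"
  define C where "C = A - M"
  have injA: "inj_on \<rho> A'" using bij by (rule bij_betw_imp_inj_on)
  have imA: "\<rho> ` A' = A" using bij by (simp add: bij_betw_def)
  have hB: "A \<inter> M = B"
  proof -
    have "A \<inter> M = \<rho> ` A' \<inter> M" using imA by simp
    also have "\<dots> = B" unfolding B_def using fixM outM by force
    finally show ?thesis .
  qed
  have hC: "\<rho> ` C' = C" unfolding C'_def C_def using imA fixM outM by force
  have bijC: "bij_betw \<rho> C' C" by (rule bij_betw_subset[OF bij _ hC]) (auto simp: C'_def)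
  have finC': "finite C'" "finite C" using finA' hC unfolding C'_def by auto
  have finB: "finite B" "B \<subseteq> M" using finA' unfolding B_def by auto
  have WM: "W \<in> borel_measurable (hg_space k)" using W unfolding borel_hypergraphon_def by auto
  have Wsym: "\<And>\<sigma> t. bij_betw \<sigma> {1..k} {1..k} \<Longrightarrow> t \<in> space (hg_space k) \<Longrightarrow> W (\<lambda>I\<in>Ik k. t (\<sigma> ` I)) = W t"
    using W unfolding borel_hypergraphon_def by auto
  have bCs: "bij_betw ((`) \<rho>) (CsS k C') (CsS k C)" by (rule bij_CsS[OF bijC])
  have cardC: "card (\<rho> ` X) = card X" if "X \<subseteq> C'" for X
    using card_image inj_on_subset[OF bij_betw_imp_inj_on[OF bijC] that] by blast
  define T :: "('a set \<Rightarrow> 'a set \<Rightarrow> bool) \<Rightarrow> 'a set \<Rightarrow> 'a set \<Rightarrow> bool" where "T = (\<lambda>q. \<lambda>C0'\<in>CsS k C'. q (\<rho> ` C0'))"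
  let ?Pi = "PiM (CsS k C) (\<lambda>C0. lam k M (1 + card C0))"
  let ?Pi' = "PiM (CsS k C') (\<lambda>C0. lam k M (1 + card C0))"
  have PiM_eq: "PiM (CsS k C') (\<lambda>i. lam k M (1 + card (\<rho> ` i))) = ?Pi'"
    by (rule PiM_cong) (auto simp: CsS_def cardC)
  have distrT: "distr ?Pi ?Pi' T = ?Pi'"
  proof -
    have inj: "inj_on ((`) \<rho>) (CsS k C')" and fs: "(`) \<rho> \<in> CsS k C' \<rightarrow> CsS k C"
      using bCs unfolding bij_betw_def by auto
    show ?thesis
      using distr_PiM_reindex[of "CsS k C" "\<lambda>C0. lam k M (1 + card C0)", OF prob_space_lam inj fs]
      unfolding T_def PiM_eq .
  qed
  have Tmeas: "T \<in> ?Pi \<rightarrow>\<^sub>M ?Pi'"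
    unfolding T_def
  proof (rule measurable_restrict)
    fix C0' assume C0': "C0' \<in> CsS k C'"
    then have "\<rho> ` C0' \<in> CsS k C" using bCs unfolding bij_betw_def by auto
    then have "(\<lambda>q. q (\<rho> ` C0')) \<in> ?Pi \<rightarrow>\<^sub>M lam k M (1 + card (\<rho> ` C0'))"
      by (rule measurable_component_singleton)
    moreover have "card (\<rho> ` C0') = card C0'" using C0' cardC unfolding CsS_def by auto
    ultimately show "(\<lambda>q. q (\<rho> ` C0')) \<in> ?Pi \<rightarrow>\<^sub>M lam k M (1 + card C0')" by simp
  qed
  have sfin: "sigma_finite_measure (distr ?Pi ?Pi' T)"
    unfolding distrT by (rule prob_space_imp_sigma_finite[OF prob_space_Pi_lam])
  have Nm_eq: "Nm k M C' = distr (Nm k M C) (Nm k M C') (\<lambda>(x, y). (x, T y))"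
  proof -
    have "Nm k M C' = distr (lam k M 1) (lam k M 1) (\<lambda>x. x) \<Otimes>\<^sub>M distr ?Pi ?Pi' T"
      unfolding Nm_def distrT by simp
    also have "\<dots> = distr (lam k M 1 \<Otimes>\<^sub>M ?Pi) (lam k M 1 \<Otimes>\<^sub>M ?Pi') (\<lambda>(x, y). (x, T y))"
    proof -
      have "(\<lambda>x. x) \<in> lam k M 1 \<rightarrow>\<^sub>M lam k M 1" by simp
      from pair_measure_distr[OF this Tmeas sfin] show ?thesis by simp
    qed
    finally show ?thesis unfolding Nm_def .
  qed
  have Tm: "(\<lambda>(x, y). (x, T y)) \<in> Nm k M C \<rightarrow>\<^sub>M Nm k M C'"
    unfolding Nm_def using Tmeas by measurable
  have f'meas: "integ k M isos W (tpflat k E' M) B C' \<epsilon>' \<in> borel_measurable (Nm k M C')"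
    by (rule integ_meas0[OF k finC'(1) finB isos _ WM]) (rule tpflat_space)
  have "muXi k E' M isos W A' \<epsilon>' = integral\<^sup>L (Nm k M C') (integ k M isos W (tpflat k E' M) B C' \<epsilon>')"
    unfolding muXi_alt B_def C'_def ..
  also have "\<dots> = integral\<^sup>L (Nm k M C) (\<lambda>xq. integ k M isos W (tpflat k E' M) B C' \<epsilon>' (case xq of (x, y) \<Rightarrow> (x, T y)))"
    by (subst Nm_eq, rule integral_distr[OF Tm f'meas])
  also have "\<dots> = integral\<^sup>L (Nm k M C) (integ k M isos W (tpflat k E M) B C \<epsilon>)"
  proof (rule Bochner_Integration.integral_cong[OF refl])
    fix xq assume xq: "xq \<in> space (Nm k M C)"
    obtain x q where xq_eq: "xq = (x, q)" by fastforce
    have x: "x \<in> space (lam k M 1)" and q: "q \<in> space ?Pi"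
      using xq unfolding xq_eq Nm_def by (auto simp: space_pair_measure)
    have F1: "(\<forall>B0\<in>ksubsets B (k - 1). x B0 = \<epsilon>' B0) = (\<forall>B0\<in>ksubsets B (k - 1). x B0 = \<epsilon> B0)"
    proof -
      have "\<epsilon>' B0 = \<epsilon> B0" if "B0 \<in> ksubsets B (k - 1)" for B0
      proof -
        have "B0 \<in> ksubsets A' (k - 1)" using that unfolding ksubsets_def B_def by auto
        moreover have "\<rho> ` B0 = B0" using that fixM unfolding ksubsets_def B_def by force
        ultimately show ?thesis using eps by simp
      qed
      then show ?thesis by auto
    qed
    have F2: "(\<Prod>C0\<in>CsS k C'. \<Prod>B0\<in>ksubsets B (k - 1 - card C0). of_bool (T q C0 B0 = \<epsilon>' (B0 \<union> C0)) :: real)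
        = (\<Prod>C0\<in>CsS k C. \<Prod>B0\<in>ksubsets B (k - 1 - card C0). of_bool (q C0 B0 = \<epsilon> (B0 \<union> C0)))"
    proof -
      have "(\<Prod>C0\<in>CsS k C. \<Prod>B0\<in>ksubsets B (k - 1 - card C0). of_bool (q C0 B0 = \<epsilon> (B0 \<union> C0)) :: real)
          = (\<Prod>C0\<in>CsS k C'. \<Prod>B0\<in>ksubsets B (k - 1 - card (\<rho> ` C0)). of_bool (q (\<rho> ` C0) B0 = \<epsilon> (B0 \<union> \<rho> ` C0)))"
        by (rule prod.reindex_bij_betw[OF bCs, symmetric])
      also have "\<dots> = (\<Prod>C0\<in>CsS k C'. \<Prod>B0\<in>ksubsets B (k - 1 - card C0). of_bool (T q C0 B0 = \<epsilon>' (B0 \<union> C0)))"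
      proof (rule prod.cong[OF refl])
        fix C0 assume C0: "C0 \<in> CsS k C'"
        have cc: "card (\<rho> ` C0) = card C0" using C0 cardC unfolding CsS_def by auto
        show "(\<Prod>B0\<in>ksubsets B (k - 1 - card (\<rho> ` C0)). of_bool (q (\<rho> ` C0) B0 = \<epsilon> (B0 \<union> \<rho> ` C0)) :: real)
            = (\<Prod>B0\<in>ksubsets B (k - 1 - card C0). of_bool (T q C0 B0 = \<epsilon>' (B0 \<union> C0)))"
          unfolding cc
        proof (rule prod.cong[OF refl])
          fix B0 assume B0: "B0 \<in> ksubsets B (k - 1 - card C0)"
          have dis: "B0 \<inter> C0 = {}" using B0 C0 unfolding ksubsets_def CsS_def B_def C'_def by auto
          have fC0: "finite C0" using C0 finC' unfolding CsS_def by (auto intro: finite_subset)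
          have "card (B0 \<union> C0) = k - 1" using card_Un_disjoint[OF _ fC0 dis] B0 C0
            unfolding ksubsets_def CsS_def by auto
          then have "B0 \<union> C0 \<in> ksubsets A' (k - 1)" using B0 C0 fC0 unfolding ksubsets_def CsS_def B_def C'_def by auto
          then have "\<epsilon>' (B0 \<union> C0) = \<epsilon> (\<rho> ` B0 \<union> \<rho> ` C0)" using eps by (simp add: image_Un)
          moreover have "\<rho> ` B0 = B0" using B0 fixM unfolding ksubsets_def B_def by force
          ultimately show "of_bool (q (\<rho> ` C0) B0 = \<epsilon> (B0 \<union> \<rho> ` C0)) = (of_bool (T q C0 B0 = \<epsilon>' (B0 \<union> C0)) :: real)"
            using C0 unfolding T_def by simp
        qed
      qed
      finally show ?thesis by simp
    qed
    have F3: "(\<Prod>C0\<in>ksubsets C' (k - 1). sgnW (\<epsilon>' C0) (W (WargG k isos (tpflat k E' M) x (T q) C0)))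
        = (\<Prod>C0\<in>ksubsets C (k - 1). sgnW (\<epsilon> C0) (W (WargG k isos (tpflat k E M) x q C0)))"
    proof -
      have "(\<Prod>C0\<in>ksubsets C (k - 1). sgnW (\<epsilon> C0) (W (WargG k isos (tpflat k E M) x q C0)))
         = (\<Prod>C0\<in>ksubsets C' (k - 1). sgnW (\<epsilon> (\<rho> ` C0)) (W (WargG k isos (tpflat k E M) x q (\<rho> ` C0))))"
        by (rule prod.reindex_bij_betw[OF bij_ksubsets[OF bijC], symmetric])
      also have "\<dots> = (\<Prod>C0\<in>ksubsets C' (k - 1). sgnW (\<epsilon>' C0) (W (WargG k isos (tpflat k E' M) x (T q) C0)))"
      proof (rule prod.cong[OF refl])
        fix C0 assume C0: "C0 \<in> ksubsets C' (k - 1)"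
        have C0A: "C0 \<in> ksubsets A' (k - 1)" using C0 unfolding ksubsets_def C'_def by auto
        have C0C': "C0 \<subseteq> C'" using C0 unfolding ksubsets_def by auto
        have injC0: "inj_on \<rho> C0" using inj_on_subset[OF injA] C0A unfolding ksubsets_def by auto
        have rC0: "\<rho> ` C0 \<in> ksubsets C (k - 1)"
          using bij_ksubsets[OF bijC] C0 unfolding bij_betw_def by auto
        have sp: "WargG k isos (tpflat k E M) x q (\<rho> ` C0) \<in> space (hg_space k)"
        proof (rule WargG_space[OF k rC0 isos x])
          fix D assume D: "D \<subseteq> \<rho> ` C0" "D \<noteq> {}" "card D \<le> k - 2"
          have "finite D" using D rC0 unfolding ksubsets_def by (auto intro: finite_subset)
          then have "D \<in> CsS k C" using D rC0 unfolding CsS_def ksubsets_def by (auto simp: Suc_leI card_gt_0_iff)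
          then show "q D \<in> space (lam k M (1 + card D))" using q by (auto simp: space_PiM)
        qed (rule tpflat_space)
        have "W (WargG k isos (tpflat k E' M) x (T q) C0) = W (WargG k isos (tpflat k E M) x q (\<rho> ` C0))"
        proof (rule WargG_rename[OF k C0 injC0 Wsym _ _ sp])
          fix D' assume D': "D' \<subseteq> C0" "D' \<noteq> {}"
          have "card D' \<le> card C0" using D' C0 card_mono[of C0 D'] unfolding ksubsets_def by blast
          then have cD: "card D' \<le> k - 1" using C0 unfolding ksubsets_def by auto
          have "D' \<subseteq> A' - M" using D' C0C' unfolding C'_def by auto
          then show "tpflat k E' M D' = tpflat k E M (\<rho> ` D')" using tf[of D'] D'(2) cD by blast
        next
          fix D' assume D': "D' \<subseteq> C0" "D' \<noteq> {}" "card D' \<le> k - 2"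
          have "finite D'" using D' C0 unfolding ksubsets_def by (auto intro: finite_subset)
          then have "D' \<in> CsS k C'" using D' C0C' unfolding CsS_def by (auto simp: Suc_leI card_gt_0_iff)
          then show "T q D' = q (\<rho> ` D')" unfolding T_def by simp
        qed
        then show "sgnW (\<epsilon> (\<rho> ` C0)) (W (WargG k isos (tpflat k E M) x q (\<rho> ` C0)))
             = sgnW (\<epsilon>' C0) (W (WargG k isos (tpflat k E' M) x (T q) C0))" using eps[OF C0A] by simp
      qed
      finally show ?thesis by simp
    qed
    show "integ k M isos W (tpflat k E' M) B C' \<epsilon>' (case xq of (x, y) \<Rightarrow> (x, T y)) = integ k M isos W (tpflat k E M) B C \<epsilon> xq"
      unfolding xq_eq integ_def using F1 F2 F3 by simp
  qed
  also have "\<dots> = muXi k E M isos W A \<epsilon>"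
    unfolding muXi_alt hB C_def ..
  finally show ?thesis .
qed


fun bigconj :: "'a hfm list \<Rightarrow> 'a hfm" where
  "bigconj [] = HEq (HVar 0) (HVar 0)"
| "bigconj (f # fs) = HConj f (bigconj fs)"

lemma hsat_bigconj: "hsat k U E e (bigconj fs) \<longleftrightarrow> (\<forall>f\<in>set fs. hsat k U E e f)"
  by (induction fs) auto

lemma hfv_bigconj: "hfv (bigconj fs) \<subseteq> {0} \<union> (\<Union>f\<in>set fs. hfv f)"
  by (induction fs) auto

lemma hpar_bigconj: "hpar (bigconj fs) = (\<Union>f\<in>set fs. hpar f)"
  by (induction fs) auto

definition freshf :: "nat \<Rightarrow> 'a hfm" where
  "freshf n = bigconj (map (\<lambda>i. HNeg (HEq (HVar 0) (HVar i))) [1..<n+1])"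

definition ratom :: "nat list \<Rightarrow> 'a hfm" where
  "ratom J = HRel (HVar 0 # map HVar J)"

definition patf :: "nat \<Rightarrow> nat \<Rightarrow> (nat list \<Rightarrow> bool) \<Rightarrow> 'a hfm" where
  "patf k n e = bigconj (map (\<lambda>J. if e J then ratom J else HNeg (ratom J)) (List.n_lists (k - 1) [1..<n+1]))"

definition psif :: "nat \<Rightarrow> nat \<Rightarrow> (nat list \<Rightarrow> bool) \<Rightarrow> 'a hfm \<Rightarrow> 'a hfm" where
  "psif k n e \<phi> = HEx 0 (HConj (freshf n) (HConj (patf k n e) (HNeg \<phi>)))"

lemma benv_upd0: "(benv x bs)(0 := a) = benv a bs"
  by (rule ext) (simp add: benv_def)

lemma benv_pos: "i \<ge> 1 \<Longrightarrow> benv a bs i = bs ! (i - 1)"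
  by (simp add: benv_def)

lemma hfv_psif:
  assumes "hfv \<phi> \<subseteq> {0..n}"
  shows "hfv (psif k n e \<phi>) \<subseteq> {1..n}"
proof -
  have "hfv (freshf n :: 'a hfm) \<subseteq> {0..n}"
    unfolding freshf_def using hfv_bigconj[of "map (\<lambda>i. HNeg (HEq (HVar 0) (HVar i))) [1..<n+1] :: 'a hfm list"]
    by auto
  moreover have "hfv (patf k n e :: 'a hfm) \<subseteq> {0..n}"
  proof -
    have "hfv (if e J then ratom J else HNeg (ratom J) :: 'a hfm) \<subseteq> {0..n}" if "J \<in> set (List.n_lists (k - 1) [1..<n+1])" for J
      using that by (auto simp: ratom_def set_n_lists)
    then show ?thesis unfolding patf_def
      using hfv_bigconj[of "map (\<lambda>J. if e J then ratom J else HNeg (ratom J)) (List.n_lists (k - 1) [1..<n+1]) :: 'a hfm list"]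
      by fastforce
  qed
  ultimately show ?thesis using assms unfolding psif_def by auto
qed

lemma hpar_psif: "hpar (psif k n e \<phi>) = hpar \<phi>"
  unfolding psif_def freshf_def patf_def by (simp only: hpar.simps hpar_bigconj) (auto simp: ratom_def split: if_splits)

lemma ball_shift: fixes n :: nat shows "(\<forall>i\<in>{1..n}. P (i - 1)) \<longleftrightarrow> (\<forall>i<n. P i)"
proof
  assume a: "\<forall>i\<in>{1..n}. P (i - 1)"
  show "\<forall>i<n. P i"
  proof (intro allI impI)
    fix i assume "i < n"
    then have "Suc i \<in> {1..n}" by auto
    then show "P i" using a by fastforce
  qed
next
  assume a: "\<forall>i<n. P i"
  show "\<forall>i\<in>{1..n}. P (i - 1)"
  proof
    fix i assume "i \<in> {1..n}"
    then have "i - 1 < n" by auto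
    then show "P (i - 1)" using a by blast
  qed
qed

lemma hsat_psif:
  assumes k: "k > 2" and len: "length bs = n"
  shows "hsat k U E (benv x bs) (psif k n e \<phi>) \<longleftrightarrow>
    (\<exists>a\<in>U. a \<notin> set bs \<and>
        (\<forall>J\<in>set (List.n_lists (k - 1) [1..<n+1]). (set (a # map (\<lambda>j. bs ! (j - 1)) J) \<in> E) = e J)
        \<and> \<not> hsat k U E (benv a bs) \<phi>)"
proof -
  have fr: "hsat k U E (benv a bs) (freshf n) \<longleftrightarrow> a \<notin> set bs" for a
  proof -
    have "hsat k U E (benv a bs) (freshf n) \<longleftrightarrow> (\<forall>i\<in>{1..n}. a \<noteq> bs ! (i - 1))"
      unfolding freshf_def hsat_bigconj by (auto simp del: upt_Suc simp: benv_def)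
    also have "\<dots> \<longleftrightarrow> a \<notin> set bs"
      unfolding ball_shift[where P="\<lambda>i. a \<noteq> bs ! i"] in_set_conv_nth len by auto
    finally show ?thesis .
  qed
  have ra: "hsat k U E (benv a bs) (ratom J) \<longleftrightarrow> set (a # map (\<lambda>j. bs ! (j - 1)) J) \<in> E"
    if "J \<in> set (List.n_lists (k - 1) [1..<n+1])" for a J
  proof -
    have "length J = k - 1" "set J \<subseteq> {1..n}" using that by (auto simp: set_n_lists)
    moreover then have "map (tval (benv a bs)) (map HVar J) = map (\<lambda>j. bs ! (j - 1)) J"
      by (auto simp: benv_def)
    ultimately show ?thesis using k unfolding ratom_def by (auto simp: benv_def)
  qed
  have pa: "hsat k U E (benv a bs) (patf k n e) \<longleftrightarrow>
     (\<forall>J\<in>set (List.n_lists (k - 1) [1..<n+1]). (set (a # map (\<lambda>j. bs ! (j - 1)) J) \<in> E) = e J)" for a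
  proof -
    have "hsat k U E (benv a bs) (patf k n e) \<longleftrightarrow>
        (\<forall>J\<in>set (List.n_lists (k - 1) [1..<n+1]). hsat k U E (benv a bs) (if e J then ratom J else HNeg (ratom J)))"
      unfolding patf_def hsat_bigconj set_map by blast
    also have "\<dots> \<longleftrightarrow> (\<forall>J\<in>set (List.n_lists (k - 1) [1..<n+1]). hsat k U E (benv a bs) (ratom J) = e J)"
      by (intro ball_cong refl) auto
    finally show ?thesis using ra by blast
  qed
  show ?thesis unfolding psif_def by (simp add: benv_upd0 fr pa)
qed


definition ee :: "nat \<Rightarrow> ('a set \<Rightarrow> bool) \<Rightarrow> 'a list \<Rightarrow> nat list \<Rightarrow> bool" where
  "ee k \<epsilon>' bs' J = (let S = set (map (\<lambda>j. bs' ! (j - 1)) J) in card S = k - 1 \<and> \<epsilon>' S)"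

lemma tp_mem: "\<psi> \<in> tp k U E M bs \<longleftrightarrow> hpar \<psi> \<subseteq> M \<and> hfv \<psi> \<subseteq> {1..length bs} \<and> hsat k U E (benv undefined bs) \<psi>"
  by (simp add: tp_def LM_def)

lemma exists_J:
  assumes S: "S \<in> ksubsets (set bs) m"
  shows "\<exists>J\<in>set (List.n_lists m [1..<length bs+1]). set (map (\<lambda>j. bs ! (j - 1)) J) = S"
proof -
  obtain xs where xs: "set xs = S" "distinct xs" using S finite_distinct_list unfolding ksubsets_def by blast
  have len: "length xs = m" using xs S distinct_card unfolding ksubsets_def by fastforce
  define ix where "ix = (\<lambda>x. SOME j. j < length bs \<and> bs ! j = x)"
  have ix: "ix x < length bs \<and> bs ! ix x = x" if "x \<in> set bs" for x
    unfolding ix_def using that in_set_conv_nth[of x bs] by (metis (mono_tags, lifting) someI)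
  define J where "J = map (\<lambda>x. ix x + 1) xs"
  have "set xs \<subseteq> set bs" using xs S unfolding ksubsets_def by auto
  then have "J \<in> set (List.n_lists m [1..<length bs+1])" unfolding J_def using ix len
    by (auto simp del: upt_Suc simp: set_n_lists)
  moreover have "map (\<lambda>j. bs ! (j - 1)) J = xs" unfolding J_def using ix \<open>set xs \<subseteq> set bs\<close>
    by (auto simp: comp_def intro!: map_idI)
  ultimately show ?thesis using xs(1) by metis
qed

lemma sel:
  assumes k: "k > 2" and len: "length bs = n" and Esub: "E \<subseteq> ksubsets U k"
    and hA: "\<And>x. x \<in> set bs \<Longrightarrow> \<rho> (h x) = x"
    and eps: "\<And>S'. S' \<in> ksubsets (set (map h bs)) (k - 1) \<Longrightarrow> \<epsilon>' S' = \<epsilon> (\<rho> ` S')"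
    and h\<phi>: "hfv \<phi> \<subseteq> {0..n}" "hpar \<phi> = {}"
  shows "psif k n (ee k \<epsilon>' (map h bs)) \<phi> \<in> tp k U E M bs \<longleftrightarrow>
    \<not> ({a\<in>U - set bs. \<forall>S\<in>ksubsets (set bs) (k - 1). (insert a S \<in> E) = \<epsilon> S} \<subseteq> {a\<in>U. hsat k U E (benv a bs) \<phi>})"
proof -
  have injh: "inj_on h (set bs)" using hA by (metis inj_onI)
  let ?NL = "set (List.n_lists (k - 1) [1..<n+1])"
  have eeJ: "ee k \<epsilon>' (map h bs) J = (card (set (map (\<lambda>j. bs ! (j - 1)) J)) = k - 1 \<and> \<epsilon> (set (map (\<lambda>j. bs ! (j - 1)) J)))"
    if J: "J \<in> ?NL" for J
  proof -
    let ?SJ = "set (map (\<lambda>j. bs ! (j - 1)) J)"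
    have Jn: "set J \<subseteq> {1..n}" using J by (auto simp del: upt_Suc simp: set_n_lists)
    have SJ: "?SJ \<subseteq> set bs" using Jn len by (auto intro!: nth_mem dest!: subsetD[OF Jn] simp del: upt_Suc)
    have jb: "\<forall>j\<in>set J. j - 1 < length bs" using Jn len by (force simp: subset_iff)
    have "map (\<lambda>j. map h bs ! (j - 1)) J = map (\<lambda>j. h (bs ! (j - 1))) J"
      by (rule map_cong[OF refl]) (use jb in auto)
    then have m: "map (\<lambda>j. map h bs ! (j - 1)) J = map h (map (\<lambda>j. bs ! (j - 1)) J)" by simp
    have c: "card (h ` ?SJ) = card ?SJ" using card_image inj_on_subset[OF injh SJ] by blast
    have r: "\<rho> ` h ` ?SJ = ?SJ" using hA SJ by (force simp: image_image)
    have sm: "set (map h (map (\<lambda>j. bs ! (j - 1)) J)) = h ` ?SJ" by (rule set_map)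
    show ?thesis
    proof (cases "card ?SJ = k - 1")
      case True
      then have "h ` ?SJ \<in> ksubsets (set (map h bs)) (k - 1)" using c SJ unfolding ksubsets_def by auto
      then have e1: "\<epsilon>' (h ` ?SJ) = \<epsilon> ?SJ" using eps r by metis
      show ?thesis unfolding ee_def Let_def m sm by (simp only: c e1)
    next
      case False
      show ?thesis unfolding ee_def Let_def m sm by (simp only: c False simp_thms)
    qed
  qed
  have key: "(\<forall>J\<in>?NL. (set (a # map (\<lambda>j. bs ! (j - 1)) J) \<in> E) = ee k \<epsilon>' (map h bs) J)
      \<longleftrightarrow> (\<forall>S\<in>ksubsets (set bs) (k - 1). (insert a S \<in> E) = \<epsilon> S)" if a: "a \<notin> set bs" for a
  proof
    assume L: "\<forall>J\<in>?NL. (set (a # map (\<lambda>j. bs ! (j - 1)) J) \<in> E) = ee k \<epsilon>' (map h bs) J"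
    show "\<forall>S\<in>ksubsets (set bs) (k - 1). (insert a S \<in> E) = \<epsilon> S"
    proof
      fix S assume S: "S \<in> ksubsets (set bs) (k - 1)"
      obtain J where J: "J \<in> ?NL" "set (map (\<lambda>j. bs ! (j - 1)) J) = S" using exists_J[OF S] len by auto
      have "card S = k - 1" using S unfolding ksubsets_def by auto
      then show "(insert a S \<in> E) = \<epsilon> S" using L J eeJ[OF J(1)] by auto
    qed
  next
    assume R: "\<forall>S\<in>ksubsets (set bs) (k - 1). (insert a S \<in> E) = \<epsilon> S"
    show "\<forall>J\<in>?NL. (set (a # map (\<lambda>j. bs ! (j - 1)) J) \<in> E) = ee k \<epsilon>' (map h bs) J"
    proof
      fix J assume J: "J \<in> ?NL"
      let ?SJ = "set (map (\<lambda>j. bs ! (j - 1)) J)"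
      have Jn: "set J \<subseteq> {1..n}" using J by (auto simp del: upt_Suc simp: set_n_lists)
      have SJ: "?SJ \<subseteq> set bs" using Jn len by (auto intro!: nth_mem dest!: subsetD[OF Jn] simp del: upt_Suc)
      show "(set (a # map (\<lambda>j. bs ! (j - 1)) J) \<in> E) = ee k \<epsilon>' (map h bs) J"
      proof (cases "card ?SJ = k - 1")
        case True
        then have "?SJ \<in> ksubsets (set bs) (k - 1)" using SJ unfolding ksubsets_def by auto
        then show ?thesis using R eeJ[OF J] True by auto
      next
        case False
        have "a \<notin> ?SJ" using a SJ by auto
        then have "card (insert a ?SJ) = card ?SJ + 1" by simp
        then have "card (insert a ?SJ) \<noteq> k" using False k by auto
        then have "insert a ?SJ \<notin> E" using Esub unfolding ksubsets_def by auto
        then show ?thesis using eeJ[OF J] False by auto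
      qed
    qed
  qed
  have inLM: "hpar (psif k n (ee k \<epsilon>' (map h bs)) \<phi>) \<subseteq> M \<and> hfv (psif k n (ee k \<epsilon>' (map h bs)) \<phi>) \<subseteq> {1..length bs}"
    using hfv_psif[OF h\<phi>(1)] hpar_psif[of k n "ee k \<epsilon>' (map h bs)" \<phi>] h\<phi>(2) len by auto
  have "psif k n (ee k \<epsilon>' (map h bs)) \<phi> \<in> tp k U E M bs \<longleftrightarrow> hsat k U E (benv undefined bs) (psif k n (ee k \<epsilon>' (map h bs)) \<phi>)"
    using inLM unfolding tp_mem by blast
  also have "\<dots> \<longleftrightarrow> (\<exists>a\<in>U. a \<notin> set bs \<and>
        (\<forall>J\<in>?NL. (set (a # map (\<lambda>j. bs ! (j - 1)) J) \<in> E) = ee k \<epsilon>' (map h bs) J)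
        \<and> \<not> hsat k U E (benv a bs) \<phi>)"
    by (rule hsat_psif[OF k len])
  also have "\<dots> \<longleftrightarrow> (\<exists>a\<in>U. a \<notin> set bs \<and> (\<forall>S\<in>ksubsets (set bs) (k - 1). (insert a S \<in> E) = \<epsilon> S)
        \<and> \<not> hsat k U E (benv a bs) \<phi>)"
    using key by blast
  also have "\<dots> \<longleftrightarrow> \<not> ({a\<in>U - set bs. \<forall>S\<in>ksubsets (set bs) (k - 1). (insert a S \<in> E) = \<epsilon> S} \<subseteq> {a\<in>U. hsat k U E (benv a bs) \<phi>})"
    by blast
  finally show ?thesis .
qed


definition fidx :: "'a list \<Rightarrow> 'a \<Rightarrow> nat" where
  "fidx bs x = (LEAST j. 1 \<le> j \<and> j \<le> length bs \<and> bs ! (j - 1) = x)"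

definition hmap :: "'a set \<Rightarrow> (nat \<Rightarrow> 'a) \<Rightarrow> 'a list \<Rightarrow> 'a \<Rightarrow> 'a" where
  "hmap M c bs x = (if x \<in> M then x else c (fidx bs x))"

definition rho :: "'a set \<Rightarrow> (nat \<Rightarrow> 'a) \<Rightarrow> 'a list \<Rightarrow> 'a \<Rightarrow> 'a" where
  "rho M c bs y = (if y \<in> M then y else bs ! (inv c y - 1))"

definition ent :: "'a set \<Rightarrow> 'a hfm set \<Rightarrow> nat \<Rightarrow> 'a + nat" where
  "ent M p i = (if \<exists>m\<in>M. HEq (HVar i) (HPar m) \<in> p then Inl (SOME m. m \<in> M \<and> HEq (HVar i) (HPar m) \<in> p)
                else Inr (LEAST j. HEq (HVar i) (HVar j) \<in> p))"

definition shp :: "'a set \<Rightarrow> nat \<Rightarrow> 'a hfm set \<Rightarrow> ('a + nat) list" where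
  "shp M n p = map (ent M p) [1..<n+1]"

definition bsS :: "(nat \<Rightarrow> 'a) \<Rightarrow> ('a + nat) list \<Rightarrow> 'a list" where
  "bsS c s = map (\<lambda>v. case v of Inl m \<Rightarrow> m | Inr j \<Rightarrow> c j) s"

definition lst :: "'a set \<Rightarrow> 'a list" where
  "lst X = (SOME xs. set xs = X \<and> distinct xs)"

definition rterms :: "'a set \<Rightarrow> (nat \<Rightarrow> 'a) \<Rightarrow> 'a set \<Rightarrow> 'a htm list" where
  "rterms M c T = map (\<lambda>y. HVar (inv c y)) (lst (T - M)) @ map HPar (lst (T \<inter> M))"

definition Ep :: "'a set \<Rightarrow> (nat \<Rightarrow> 'a) \<Rightarrow> ('a + nat) list \<Rightarrow> 'a hfm set \<Rightarrow> 'a set set" where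
  "Ep M c s p = {T. finite T \<and> T - M \<subseteq> set (bsS c s) \<and> HRel (rterms M c T) \<in> p}"

lemma lst: "finite X \<Longrightarrow> set (lst X) = X \<and> distinct (lst X)"
  unfolding lst_def using finite_distinct_list by (metis (mono_tags, lifting) someI_ex)

lemma fidx: assumes "x \<in> set bs"
  shows "1 \<le> fidx bs x \<and> fidx bs x \<le> length bs \<and> bs ! (fidx bs x - 1) = x"
proof -
  obtain i where i: "i < length bs" "bs ! i = x" using assms by (auto simp: in_set_conv_nth)
  then have "1 \<le> Suc i \<and> Suc i \<le> length bs \<and> bs ! (Suc i - 1) = x" by auto
  then show ?thesis unfolding fidx_def by (rule LeastI)
qed

locale canon =
  fixes M :: "'a set" and c :: "nat \<Rightarrow> 'a"
  assumes injc: "inj c" and cM: "\<And>j. c j \<notin> M"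
begin

lemma rho_hmap: "x \<in> set bs \<Longrightarrow> rho M c bs (hmap M c bs x) = x"
  unfolding rho_def hmap_def using fidx[of x bs] cM injc by (auto simp: inv_f_f)

lemma hmap_M: "hmap M c bs x \<in> M \<longleftrightarrow> x \<in> M"
  unfolding hmap_def using cM by auto

lemma inj_hmap: "inj_on (hmap M c bs) (set bs)"
  by (metis inj_onI rho_hmap)

lemma inj_rho: "inj_on (rho M c bs) (hmap M c bs ` set bs)"
  by (auto simp: inj_on_def rho_hmap)

lemma bij_rho: "bij_betw (rho M c bs) (hmap M c bs ` set bs) (set bs)"
  unfolding bij_betw_def using inj_rho rho_hmap by (force simp: image_image)

lemma tp_HEq_par:
  assumes "i \<in> {1..length bs}"
  shows "HEq (HVar i) (HPar m) \<in> tp k U E M bs \<longleftrightarrow> m \<in> M \<and> bs ! (i - 1) = m"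
  using assms by (auto simp: tp_mem benv_def)

lemma tp_HEq_var:
  assumes "i \<in> {1..length bs}"
  shows "HEq (HVar i) (HVar j) \<in> tp k U E M bs \<longleftrightarrow> 1 \<le> j \<and> j \<le> length bs \<and> bs ! (j - 1) = bs ! (i - 1)"
  using assms by (auto simp: tp_mem benv_def)

lemma shp_tp:
  assumes len: "length bs = n"
  shows "bsS c (shp M n (tp k U E M bs)) = map (hmap M c bs) bs"
proof (rule nth_equalityI)
  show "length (bsS c (shp M n (tp k U E M bs))) = length (map (hmap M c bs) bs)"
    using len by (simp add: bsS_def shp_def)
  fix i assume "i < length (bsS c (shp M n (tp k U E M bs)))"
  then have i: "i < n" by (simp del: upt_Suc add: bsS_def shp_def)
  have iv: "Suc i \<in> {1..length bs}" using i len by auto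
  have e: "ent M (tp k U E M bs) (Suc i) = (if bs ! i \<in> M then Inl (bs ! i) else Inr (fidx bs (bs ! i)))"
  proof (cases "bs ! i \<in> M")
    case True
    have ex: "\<exists>m\<in>M. HEq (HVar (Suc i)) (HPar m) \<in> tp k U E M bs" using tp_HEq_par[OF iv] True by auto
    have "(SOME m. m \<in> M \<and> HEq (HVar (Suc i)) (HPar m) \<in> tp k U E M bs) = bs ! i"
      using tp_HEq_par[OF iv] True by auto
    then show ?thesis unfolding ent_def using ex True by simp
  next
    case False
    have nex: "\<not> (\<exists>m\<in>M. HEq (HVar (Suc i)) (HPar m) \<in> tp k U E M bs)" using tp_HEq_par[OF iv] False by auto
    have "(\<lambda>j. HEq (HVar (Suc i)) (HVar j) \<in> tp k U E M bs) = (\<lambda>j. 1 \<le> j \<and> j \<le> length bs \<and> bs ! (j - 1) = bs ! i)"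
      using tp_HEq_var[OF iv] by auto
    then show ?thesis unfolding ent_def using nex False by (simp add: fidx_def)
  qed
  have "shp M n (tp k U E M bs) ! i = ent M (tp k U E M bs) (Suc i)"
    unfolding shp_def using i by (simp del: upt_Suc)
  moreover have "i < length (shp M n (tp k U E M bs))" using i by (simp del: upt_Suc add: shp_def)
  ultimately show "bsS c (shp M n (tp k U E M bs)) ! i = map (hmap M c bs) bs ! i"
    using e i len unfolding bsS_def hmap_def by (simp del: upt_Suc)
qed

lemma tpflat_Ep:
  assumes len: "length bs = n"
    and D': "D' \<subseteq> hmap M c bs ` set bs - M" and cD: "card D' \<le> k"
  shows "tpflat k (Ep M c (shp M n (tp k U E M bs)) (tp k U E M bs)) M D' = tpflat k E M (rho M c bs ` D')"
proof -
  let ?p = "tp k U E M bs"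
  let ?s = "shp M n ?p"
  let ?h = "hmap M c bs"
  let ?r = "rho M c bs"
  have bsS: "set (bsS c ?s) = ?h ` set bs" using shp_tp[OF len] by simp
  have finD: "finite D'" using D' by (rule finite_subset) auto
  have cr: "card (?r ` D') = card D'" using inj_on_subset[OF inj_rho] D' card_image by blast
  have inv_c: "inv c y \<in> {1..length bs} \<and> bs ! (inv c y - 1) = ?r y" if yD: "y \<in> D'" for y
  proof -
    obtain x where x: "x \<in> set bs" "y = ?h x" "y \<notin> M" using D' yD by auto
    then have "x \<notin> M" using hmap_M by auto
    then have "y = c (fidx bs x)" using x unfolding hmap_def by auto
    then have "inv c y = fidx bs x" using injc by (simp add: inv_f_f)
    then show ?thesis using fidx[OF x(1)] x rho_hmap by auto
  qed
  have key: "D' \<union> F \<in> Ep M c ?s ?p \<longleftrightarrow> ?r ` D' \<union> F \<in> E" if F: "F \<in> ksubsets M (k - card D')" for F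
  proof -
    have finF: "finite F" and FM: "F \<subseteq> M" and cF: "card F = k - card D'" using F unfolding ksubsets_def by auto
    have DM: "D' \<inter> M = {}" using D' by auto
    have d1: "(D' \<union> F) - M = D'" using DM FM by auto
    have d2: "(D' \<union> F) \<inter> M = F" using DM FM by auto
    note l1 = lst[OF finD] and l2 = lst[OF finF]
    let ?ts = "rterms M c (D' \<union> F)"
    have ts: "?ts = map (\<lambda>y. HVar (inv c y)) (lst D') @ map HPar (lst F)"
      unfolding rterms_def d1 d2 ..
    have ld: "length (lst D') = card D'" using distinct_card[of "lst D'"] l1 by simp
    have lf: "length (lst F) = card F" using distinct_card[of "lst F"] l2 by simp
    have lts: "length ?ts = k"
      unfolding ts using ld lf cF cD by simp
    have hp: "hpar (HRel ?ts) = F" unfolding ts using l2 by auto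
    have hf: "hfv (HRel ?ts) \<subseteq> {1..length bs}" unfolding ts using l1 inv_c by auto
    have sv: "set (map (tval (benv undefined bs)) ?ts) = ?r ` D' \<union> F"
    proof -
      have "set (map (tval (benv undefined bs)) ?ts) = (\<lambda>y. benv undefined bs (inv c y)) ` D' \<union> F"
        unfolding ts using l1 l2 by auto
      also have "(\<lambda>y. benv undefined bs (inv c y)) ` D' = ?r ` D'"
      proof (rule image_cong[OF refl])
        fix y assume "y \<in> D'"
        then show "benv undefined bs (inv c y) = ?r y" using inv_c[of y] benv_pos[of "inv c y" undefined bs] by auto
      qed
      finally show ?thesis .
    qed
    have "D' \<union> F \<in> Ep M c ?s ?p \<longleftrightarrow> HRel ?ts \<in> ?p"
      unfolding Ep_def using finD finF d1 D' bsS by auto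
    also have "\<dots> \<longleftrightarrow> ?r ` D' \<union> F \<in> E"
      unfolding tp_mem using hp hf FM lts sv by auto
    finally show ?thesis .
  qed
  show ?thesis unfolding tpflat_def cr using key by (intro restrict_ext) auto
qed

end


definition Gs :: "nat \<Rightarrow> 'a set \<Rightarrow> (nat \<Rightarrow> ('a set \<Rightarrow> bool) \<Rightarrow> real) \<Rightarrow> ((nat set \<Rightarrow> real) \<Rightarrow> real)
    \<Rightarrow> (nat \<Rightarrow> 'a) \<Rightarrow> nat \<Rightarrow> 'a hfm \<Rightarrow> ('a + nat) list \<Rightarrow> 'a hfm set \<Rightarrow> real" where
  "Gs k M isos W c n \<phi> s p = (\<Sum>\<epsilon>'\<in>PiE (ksubsets (set (bsS c s)) (k - 1)) (\<lambda>_. UNIV).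
      if psif k n (ee k \<epsilon>' (bsS c s)) \<phi> \<in> p then 0 else muXi k (Ep M c s p) M isos W (set (bsS c s)) \<epsilon>')"

lemma finite_PiE_ks: "finite A \<Longrightarrow> finite (PiE (ksubsets A m) (\<lambda>_. UNIV :: bool set))"
  by (intro finite_PiE finite_ksubsets) auto

context canon
begin

lemma muW_eq:
  assumes k: "k > 2" and Esub: "E \<subseteq> ksubsets U k" and len: "length bs = n"
    and h\<phi>: "hfv \<phi> \<subseteq> {0..n}" "hpar \<phi> = {}"
    and isos: "\<forall>j\<in>{1..k - 1}. isos j \<in> lam k M j \<rightarrow>\<^sub>M unit_leb"
    and W: "borel_hypergraphon k W"
  shows "muW k U E M isos W \<phi> bs = Gs k M isos W c n \<phi> (shp M n (tp k U E M bs)) (tp k U E M bs)"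
proof -
  let ?p = "tp k U E M bs"
  let ?s = "shp M n ?p"
  let ?h = "hmap M c bs"
  let ?r = "rho M c bs"
  define A where "A = set bs"
  define A' where "A' = ?h ` A"
  have bs': "bsS c ?s = map ?h bs" by (rule shp_tp[OF len])
  have sA': "set (bsS c ?s) = A'" unfolding bs' A'_def A_def by simp
  have finA: "finite A" "finite A'" unfolding A_def A'_def by auto
  have bij: "bij_betw ?r A' A" unfolding A'_def A_def by (rule bij_rho)
  have bijh: "bij_betw ?h A A'" unfolding A'_def A_def using inj_hmap by (simp add: bij_betw_imageI)
  have rh: "\<And>x. x \<in> A \<Longrightarrow> ?r (?h x) = x" unfolding A_def by (rule rho_hmap)
  have hr: "\<And>y. y \<in> A' \<Longrightarrow> ?h (?r y) = y" unfolding A'_def using rh by auto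
  have fixM: "\<And>x. x \<in> A' \<Longrightarrow> x \<in> M \<Longrightarrow> ?r x = x" by (simp add: rho_def)
  have outM: "\<And>x. x \<in> A' \<Longrightarrow> x \<notin> M \<Longrightarrow> ?r x \<notin> M"
    unfolding A'_def using rh hmap_M by auto
  define PE where "PE = PiE (ksubsets A (k - 1)) (\<lambda>_. UNIV :: bool set)"
  define PE' where "PE' = PiE (ksubsets A' (k - 1)) (\<lambda>_. UNIV :: bool set)"
  define Xi where "Xi = (\<lambda>\<epsilon>. {a\<in>U - A. \<forall>S\<in>ksubsets A (k - 1). (insert a S \<in> E) = \<epsilon> S})"
  define Phi where "Phi = {a\<in>U. hsat k U E (benv a bs) \<phi>}"
  have "muW k U E M isos W \<phi> bs = (\<Sum>\<epsilon>\<in>{\<epsilon>\<in>PE. Xi \<epsilon> \<subseteq> Phi}. muXi k E M isos W A \<epsilon>)"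
    unfolding muW_def Let_def PE_def Xi_def Phi_def A_def ..
  also have "\<dots> = (\<Sum>\<epsilon>\<in>PE. if Xi \<epsilon> \<subseteq> Phi then muXi k E M isos W A \<epsilon> else 0)"
    by (rule sum.inter_filter) (unfold PE_def, rule finite_PiE_ks[OF finA(1)])
  also have "\<dots> = (\<Sum>\<epsilon>'\<in>PE'. if psif k n (ee k \<epsilon>' (bsS c ?s)) \<phi> \<in> ?p then 0 else muXi k (Ep M c ?s ?p) M isos W A' \<epsilon>')"
  proof (rule sum.reindex_bij_witness[where j = "\<lambda>\<epsilon>. \<lambda>S'\<in>ksubsets A' (k - 1). \<epsilon> (?r ` S')"
        and i = "\<lambda>\<epsilon>'. \<lambda>S\<in>ksubsets A (k - 1). \<epsilon>' (?h ` S)"])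
    have bk: "bij_betw ((`) ?r) (ksubsets A' (k - 1)) (ksubsets A (k - 1))" by (rule bij_ksubsets[OF bij])
    have bk': "bij_betw ((`) ?h) (ksubsets A (k - 1)) (ksubsets A' (k - 1))" by (rule bij_ksubsets[OF bijh])
    have rhS: "?r ` ?h ` S = S" if "S \<in> ksubsets A (k - 1)" for S
      using that rh unfolding ksubsets_def by (force simp: image_image)
    have hrS: "?h ` ?r ` S = S" if "S \<in> ksubsets A' (k - 1)" for S
      using that hr unfolding ksubsets_def by (force simp: image_image)
    fix \<epsilon> assume e: "\<epsilon> \<in> PE"
    show "(\<lambda>S\<in>ksubsets A (k - 1). (\<lambda>S'\<in>ksubsets A' (k - 1). \<epsilon> (?r ` S')) (?h ` S)) = \<epsilon>"
      using e bk' rhS unfolding PE_def bij_betw_def by (auto simp: fun_eq_iff PiE_def extensional_def)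
    show "(\<lambda>S'\<in>ksubsets A' (k - 1). \<epsilon> (?r ` S')) \<in> PE'" unfolding PE'_def by auto
    define \<epsilon>' where "\<epsilon>' = (\<lambda>S'\<in>ksubsets A' (k - 1). \<epsilon> (?r ` S'))"
    have eps: "\<And>S'. S' \<in> ksubsets (set (map ?h bs)) (k - 1) \<Longrightarrow> \<epsilon>' S' = \<epsilon> (?r ` S')"
      unfolding \<epsilon>'_def A'_def A_def by simp
    have sel': "psif k n (ee k \<epsilon>' (map ?h bs)) \<phi> \<in> ?p \<longleftrightarrow> \<not> (Xi \<epsilon> \<subseteq> Phi)"
      unfolding Xi_def Phi_def A_def
      by (rule sel[where M=M and \<rho>="rho M c bs" and h="hmap M c bs"]) (use k len Esub eps h\<phi> rho_hmap in auto)
    have mu: "muXi k (Ep M c ?s ?p) M isos W A' \<epsilon>' = muXi k E M isos W A \<epsilon>"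
    proof (rule muXi_rename[OF k finA(2) bij fixM outM _ _ isos W])
      fix S' assume "S' \<in> ksubsets A' (k - 1)"
      then show "\<epsilon>' S' = \<epsilon> (?r ` S')" unfolding \<epsilon>'_def by simp
    next
      fix D' assume D': "D' \<subseteq> A' - M" "D' \<noteq> {}" "card D' \<le> k - 1"
      show "tpflat k (Ep M c ?s ?p) M D' = tpflat k E M (?r ` D')"
        by (rule tpflat_Ep[OF len]) (use D' in \<open>auto simp: A'_def A_def\<close>)
    qed
    show "(if psif k n (ee k \<epsilon>' (bsS c ?s)) \<phi> \<in> ?p then 0 else muXi k (Ep M c ?s ?p) M isos W A' \<epsilon>')
        = (if Xi \<epsilon> \<subseteq> Phi then muXi k E M isos W A \<epsilon> else 0)"
      unfolding bs' sel' mu by simp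
  next
    have bk: "bij_betw ((`) ?r) (ksubsets A' (k - 1)) (ksubsets A (k - 1))" by (rule bij_ksubsets[OF bij])
    have hrS: "?h ` ?r ` S = S" if "S \<in> ksubsets A' (k - 1)" for S
      using that hr unfolding ksubsets_def by (force simp: image_image)
    fix \<epsilon>' assume e: "\<epsilon>' \<in> PE'"
    show "(\<lambda>S'\<in>ksubsets A' (k - 1). (\<lambda>S\<in>ksubsets A (k - 1). \<epsilon>' (?h ` S)) (?r ` S')) = \<epsilon>'"
      using e bk hrS unfolding PE'_def bij_betw_def by (auto simp: fun_eq_iff PiE_def extensional_def)
    show "(\<lambda>S\<in>ksubsets A (k - 1). \<epsilon>' (?h ` S)) \<in> PE" unfolding PE_def by auto
  qed
  also have "\<dots> = Gs k M isos W c n \<phi> ?s ?p"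
    unfolding Gs_def sA' PE'_def ..
  finally show ?thesis .
qed

end


lemma stone_space: "space (stone_borel k M E n) = types k M E n"
  unfolding stone_borel_def by (simp add: space_measure_of_conv)

lemma stone_open_sub: "stone_open k M E n \<subseteq> Pow (types k M E n)"
  unfolding stone_open_def stone_basic_def by auto

lemma stone_sets: "sets (stone_borel k M E n) = sigma_sets (types k M E n) (stone_open k M E n)"
  unfolding stone_borel_def by (rule sets_measure_of[OF stone_open_sub])

lemma basic_sets: "{p\<in>types k M E n. \<psi> \<in> p} \<in> sets (stone_borel k M E n)"
proof (cases "\<psi> \<in> LM M {1..n}")
  case True
  have "stone_basic k M E n \<psi> \<in> stone_open k M E n"
    unfolding stone_open_def using True by (intro CollectI exI[of _ "{stone_basic k M E n \<psi>}"]) auto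
  then show ?thesis unfolding stone_sets stone_basic_def by (rule sigma_sets.Basic)
next
  case False
  then have "{p\<in>types k M E n. \<psi> \<in> p} = {}" unfolding types_def by auto
  then show ?thesis by (metis (no_types) sets.empty_sets)
qed

lemma pred_basic: "Measurable.pred (stone_borel k M E n) (\<lambda>p. \<psi> \<in> p)"
  unfolding pred_def stone_space by (rule basic_sets)

lemma types_fs: "p \<in> types k M E n \<Longrightarrow> F \<subseteq> p \<Longrightarrow> finite F \<Longrightarrow>
    \<exists>e. (\<forall>i. e i \<in> M) \<and> (\<forall>\<psi>\<in>F. hsat k M (induced_edges E M) e \<psi>)"
  unfolding types_def by auto

lemma types_compl: "p \<in> types k M E n \<Longrightarrow> \<psi> \<in> LM M {1..n} \<Longrightarrow> \<psi> \<in> p \<or> HNeg \<psi> \<in> p"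
  unfolding types_def by auto

lemma types_uniq:
  assumes p: "p \<in> types k M E n" and "HEq (HVar i) (HPar m) \<in> p" "HEq (HVar i) (HPar m') \<in> p"
  shows "m = m'"
proof -
  have "finite {HEq (HVar i) (HPar m), HEq (HVar i) (HPar m')}" by simp
  then obtain e where "\<forall>\<psi>\<in>{HEq (HVar i) (HPar m), HEq (HVar i) (HPar m')}. hsat k M (induced_edges E M) e \<psi>"
    using types_fs[OF p, of "{HEq (HVar i) (HPar m), HEq (HVar i) (HPar m')}"] assms by auto
  then show ?thesis by auto
qed

lemma types_refl:
  assumes p: "p \<in> types k M E n" and i: "i \<in> {1..n}"
  shows "HEq (HVar i) (HVar i) \<in> p"
proof (rule ccontr)
  assume a: "HEq (HVar i) (HVar i) \<notin> p"
  have "HEq (HVar i) (HVar i) \<in> LM M {1..n}" using i unfolding LM_def by auto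
  then have "HNeg (HEq (HVar i) (HVar i)) \<in> p" using types_compl[OF p] a by blast
  moreover have "finite {HNeg (HEq (HVar i) (HVar i))}" by simp
  ultimately obtain e where "\<forall>\<psi>\<in>{HNeg (HEq (HVar i) (HVar i))}. hsat k M (induced_edges E M) e \<psi>"
    using types_fs[OF p, of "{HNeg (HEq (HVar i) (HVar i))}"] by auto
  then show False by simp
qed

lemma Least_eq_iff_nat: "(\<exists>x. P x) \<Longrightarrow> ((LEAST x::nat. P x) = j) \<longleftrightarrow> P j \<and> (\<forall>j'<j. \<not> P j')"
  by (metis LeastI_ex Least_equality not_less_Least not_le)

lemma pred_const_stone: "Measurable.pred N (\<lambda>p. b)"
  by simp

lemma ent_pred:
  assumes cM: "countable M" "M \<noteq> {}" and i: "i \<in> {1..n}"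
  shows "Measurable.pred (stone_borel k M E n) (\<lambda>p. ent M p i = v)"
proof -
  let ?S = "stone_borel k M E n"
  define f where "f = from_nat_into M"
  have fM: "range f = M" unfolding f_def using cM by (simp add: range_from_nat_into)
  define Q where "Q = (\<lambda>p. case v of Inl m \<Rightarrow> m \<in> M \<and> HEq (HVar i) (HPar m) \<in> p
        | Inr j \<Rightarrow> (\<forall>l. HEq (HVar i) (HPar (f l)) \<notin> p) \<and> HEq (HVar i) (HVar j) \<in> p \<and> (\<forall>j'<j. HEq (HVar i) (HVar j') \<notin> p))"
  have eq: "(ent M p i = v) = Q p" if p: "p \<in> types k M E n" for p
  proof (cases v)
    case (Inl m)
    show ?thesis
    proof
      assume e: "ent M p i = v"
      then have ex: "\<exists>m\<in>M. HEq (HVar i) (HPar m) \<in> p" unfolding ent_def Inl by (auto split: if_splits)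
      then have "(SOME m. m \<in> M \<and> HEq (HVar i) (HPar m) \<in> p) = m" using e unfolding ent_def Inl by simp
      moreover have "(SOME m. m \<in> M \<and> HEq (HVar i) (HPar m) \<in> p) \<in> M \<and> HEq (HVar i) (HPar (SOME m. m \<in> M \<and> HEq (HVar i) (HPar m) \<in> p)) \<in> p"
        using ex by (metis (mono_tags, lifting) someI_ex)
      ultimately show "Q p" unfolding Q_def Inl by auto
    next
      assume "Q p"
      then have m: "m \<in> M" "HEq (HVar i) (HPar m) \<in> p" unfolding Q_def Inl by auto
      then have "(SOME m'. m' \<in> M \<and> HEq (HVar i) (HPar m') \<in> p) = m"
        using types_uniq[OF p] by (intro some_equality) auto
      then show "ent M p i = v" unfolding ent_def Inl using m by auto
    qed
  next
    case (Inr j)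
    have ex: "\<exists>j. HEq (HVar i) (HVar j) \<in> p" using types_refl[OF p i] by auto
    have nm: "(\<exists>m\<in>M. HEq (HVar i) (HPar m) \<in> p) \<longleftrightarrow> \<not> (\<forall>l. HEq (HVar i) (HPar (f l)) \<notin> p)"
      using fM by auto
    show ?thesis unfolding ent_def Q_def Inr using Least_eq_iff_nat[OF ex, of j] nm by auto
  qed
  have pQ: "Measurable.pred ?S Q"
  proof (cases v)
    case (Inl m)
    show ?thesis
    proof (cases "m \<in> M")
      case True then show ?thesis unfolding Q_def Inl using pred_basic by simp
    next
      case False then show ?thesis unfolding Q_def Inl by simp
    qed
  next
    case (Inr j)
    have [measurable]: "Measurable.pred ?S (\<lambda>p. \<psi> \<in> p)" for \<psi> by (rule pred_basic)
    show ?thesis unfolding Q_def Inr sum.case by measurable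
  qed
  have "{p \<in> space ?S. ent M p i = v} = {p \<in> space ?S. Q p}" using eq unfolding stone_space by auto
  then show ?thesis using pQ unfolding pred_def by simp
qed

lemma pred_False: "Measurable.pred N (\<lambda>p. False)"
  by (rule measurable_const) simp

definition SH :: "'a set \<Rightarrow> ('a + nat) list set" where
  "SH M = lists (Inl ` M \<union> range Inr)"

lemma countable_SH: "countable M \<Longrightarrow> countable (SH M)"
  unfolding SH_def by (intro countable_lists countable_Un countable_image) auto

lemma shp_eq_iff: "shp M n p = s \<longleftrightarrow> length s = n \<and> (\<forall>i<n. ent M p (Suc i) = s ! i)"
  unfolding shp_def by (auto simp del: upt_Suc simp: list_eq_iff_nth_eq)

lemma shp_meas:
  assumes cM: "countable M" "M \<noteq> {}"
  shows "shp M n \<in> stone_borel k M E n \<rightarrow>\<^sub>M count_space (SH M)"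
proof (subst measurable_count_space_eq_countable[OF countable_SH[OF cM(1)]], intro conjI ballI)
  show "shp M n \<in> space (stone_borel k M E n) \<rightarrow> SH M"
  proof
    fix p
    have "ent M p i \<in> Inl ` M \<union> range Inr" for i
    proof (cases "\<exists>m\<in>M. HEq (HVar i) (HPar m) \<in> p")
      case True
      then have "(SOME m. m \<in> M \<and> HEq (HVar i) (HPar m) \<in> p) \<in> M" by (metis (mono_tags, lifting) someI_ex)
      then show ?thesis unfolding ent_def using True by auto
    qed (auto simp: ent_def)
    then have "set (shp M n p) \<subseteq> Inl ` M \<union> range Inr" unfolding shp_def by (auto simp del: upt_Suc)
    then show "shp M n p \<in> SH M" unfolding SH_def by (simp add: in_listsI subset_iff)
  qed
next
  fix s assume s: "s \<in> SH M"
  have "Measurable.pred (stone_borel k M E n) (\<lambda>p. shp M n p = s)"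
  proof (cases "length s = n")
    case True
    have "Measurable.pred (stone_borel k M E n) (\<lambda>p. \<forall>i\<in>{..<n}. ent M p (Suc i) = s ! i)"
    proof (rule pred_intros_finite(3))
      show "finite {..<n}" by simp
      fix i assume "i \<in> {..<n}"
      then have "Suc i \<in> {1..n}" by auto
      then show "Measurable.pred (stone_borel k M E n) (\<lambda>p. ent M p (Suc i) = s ! i)" by (rule ent_pred[OF cM])
    qed
    moreover have "(\<lambda>p. shp M n p = s) = (\<lambda>p. \<forall>i\<in>{..<n}. ent M p (Suc i) = s ! i)"
      using True by (auto simp: shp_eq_iff fun_eq_iff)
    ultimately show ?thesis by (simp only:)
  next
    case False
    then have "(\<lambda>p. shp M n p = s) = (\<lambda>p. False)" by (auto simp: shp_eq_iff fun_eq_iff)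
    then show ?thesis by (simp only: pred_False)
  qed
  then have "{p \<in> space (stone_borel k M E n). shp M n p = s} \<in> sets (stone_borel k M E n)"
    unfolding pred_def .
  moreover have "shp M n -` {s} \<inter> space (stone_borel k M E n) = {p \<in> space (stone_borel k M E n). shp M n p = s}"
    by auto
  ultimately show "shp M n -` {s} \<inter> space (stone_borel k M E n) \<in> sets (stone_borel k M E n)" by simp
qed

lemma tpflat_Ep_meas:
  "(\<lambda>p. tpflat k (Ep M c s p) M D) \<in> stone_borel k M E n \<rightarrow>\<^sub>M lam k M (card D)"
  unfolding tpflat_def lam_def
proof (rule measurable_restrict)
  fix F assume F: "F \<in> ksubsets M (k - card D)"
  have "Measurable.pred (stone_borel k M E n) (\<lambda>p. D \<union> F \<in> Ep M c s p)"
  proof (cases "finite D \<and> finite F \<and> D \<union> F - M \<subseteq> set (bsS c s)")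
    case True
    then have "(\<lambda>p. D \<union> F \<in> Ep M c s p) = (\<lambda>p. HRel (rterms M c (D \<union> F)) \<in> p)"
      by (auto simp: Ep_def fun_eq_iff)
    then show ?thesis by (simp only: pred_basic)
  next
    case False
    then have "(\<lambda>p. D \<union> F \<in> Ep M c s p) = (\<lambda>p. False)" by (auto simp: Ep_def fun_eq_iff)
    then show ?thesis by (simp only: pred_False)
  qed
  moreover have "stone_borel k M E n \<rightarrow>\<^sub>M measure_pmf (bernoulli_pmf (1/2)) = stone_borel k M E n \<rightarrow>\<^sub>M count_space UNIV"
    by (rule measurable_cong_sets) auto
  ultimately show "(\<lambda>p. D \<union> F \<in> Ep M c s p) \<in> stone_borel k M E n \<rightarrow>\<^sub>M measure_pmf (bernoulli_pmf (1/2))" by simp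
qed

lemma prob_space_Nm: "prob_space (Nm k M C)"
  unfolding Nm_def by (intro prob_space_pair prob_space_lam prob_space_Pi_lam)

lemma muXi_Ep_meas:
  assumes k: "k > 2" and A: "finite A"
    and isos: "\<forall>j\<in>{1..k - 1}. isos j \<in> lam k M j \<rightarrow>\<^sub>M unit_leb"
    and W: "W \<in> borel_measurable (hg_space k)"
  shows "(\<lambda>p. muXi k (Ep M c s p) M isos W A \<epsilon>) \<in> borel_measurable (stone_borel k M E n)"
proof -
  have sf: "sigma_finite_measure (Nm k M (A - M))"
    by (rule prob_space_imp_sigma_finite[OF prob_space_Nm])
  have fin: "finite (A - M)" "finite (A \<inter> M)" "A \<inter> M \<subseteq> M" using A by auto
  have "(\<lambda>x. integ k M isos W ((\<lambda>p. tpflat k (Ep M c s p) M) (fst x)) (A \<inter> M) (A - M) \<epsilon> (snd x))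
      \<in> borel_measurable (stone_borel k M E n \<Otimes>\<^sub>M Nm k M (A - M))"
    by (rule integ_meas[OF k fin isos _ W]) (rule tpflat_Ep_meas)
  then have "case_prod (\<lambda>p xq. integ k M isos W (tpflat k (Ep M c s p) M) (A \<inter> M) (A - M) \<epsilon> xq)
      \<in> borel_measurable (stone_borel k M E n \<Otimes>\<^sub>M Nm k M (A - M))"
    by (simp add: split_beta')
  from sigma_finite_measure.borel_measurable_lebesgue_integral[OF sf this]
  show ?thesis unfolding muXi_alt .
qed

lemma Gs_meas:
  assumes k: "k > 2"
    and isos: "\<forall>j\<in>{1..k - 1}. isos j \<in> lam k M j \<rightarrow>\<^sub>M unit_leb"
    and W: "W \<in> borel_measurable (hg_space k)"
  shows "Gs k M isos W c n \<phi> s \<in> borel_measurable (stone_borel k M E n)"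
  unfolding Gs_def
proof (rule borel_measurable_sum)
  fix \<epsilon>' :: "'a set \<Rightarrow> bool" assume "\<epsilon>' \<in> PiE (ksubsets (set (bsS c s)) (k - 1)) (\<lambda>_. UNIV)"
  show "(\<lambda>p. if psif k n (ee k \<epsilon>' (bsS c s)) \<phi> \<in> p then 0 else muXi k (Ep M c s p) M isos W (set (bsS c s)) \<epsilon>')
      \<in> borel_measurable (stone_borel k M E n)"
    by (rule measurable_If[OF measurable_const muXi_Ep_meas[OF k _ isos W]])
       (auto simp: stone_space intro: basic_sets[unfolded stone_space])
qed


lemma outside:
  assumes mod: "model_Tk k U E" and sat: "aleph1_saturated k U E" and MU: "M \<subseteq> U"
    and cM: "countable M" and F: "finite F"
  shows "\<exists>a\<in>U. a \<notin> M \<and> a \<notin> F"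
proof -
  define A where "A = M \<union> (F \<inter> U)"
  define f :: "'a \<Rightarrow> 'a hfm" where "f = (\<lambda>b. HNeg (HEq (HVar 0) (HPar b)))"
  have cA: "countable A" unfolding A_def using cM F by (simp add: countable_finite)
  have AU: "A \<subseteq> U" unfolding A_def using MU by auto
  have hp: "\<forall>\<psi>\<in>f ` A. hpar \<psi> \<subseteq> A \<and> hfv \<psi> \<subseteq> {0}" unfolding f_def by auto
  have fs: "\<forall>Fs. Fs \<subseteq> f ` A \<and> finite Fs \<longrightarrow> (\<exists>a\<in>U. \<forall>\<psi>\<in>Fs. hsat k U E (\<lambda>_. a) \<psi>)"
  proof (intro allI impI)
    fix Fs assume Fs: "Fs \<subseteq> f ` A \<and> finite Fs"
    then obtain Bs where Bs: "Bs \<subseteq> A" "finite Bs" "Fs = f ` Bs"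
      using finite_subset_image[of Fs f A] by blast
    have ext: "\<forall>A \<A>. finite A \<and> A \<subseteq> U \<and> \<A> \<subseteq> ksubsets A (k - 1) \<longrightarrow>
        (\<exists>x\<in>U - A. \<forall>S\<in>ksubsets A (k - 1). (insert x S \<in> E) \<longleftrightarrow> S \<in> \<A>)"
      using mod unfolding model_Tk_def by (elim conjE)
    have "finite Bs \<and> Bs \<subseteq> U \<and> {} \<subseteq> ksubsets Bs (k - 1)" using Bs AU by auto
    from ext[rule_format, OF this] obtain x where x: "x \<in> U - Bs" by (elim bexE)
    show "\<exists>a\<in>U. \<forall>\<psi>\<in>Fs. hsat k U E (\<lambda>_. a) \<psi>"
      using x Bs unfolding f_def by auto
  qed
  have satd: "\<forall>A \<Sigma>. countable A \<and> A \<subseteq> U \<and> (\<forall>\<psi>\<in>\<Sigma>. hpar \<psi> \<subseteq> A \<and> hfv \<psi> \<subseteq> {0}) \<and>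
        (\<forall>F. F \<subseteq> \<Sigma> \<and> finite F \<longrightarrow> (\<exists>a\<in>U. \<forall>\<psi>\<in>F. hsat k U E (\<lambda>_. a) \<psi>)) \<longrightarrow>
        (\<exists>a\<in>U. \<forall>\<psi>\<in>\<Sigma>. hsat k U E (\<lambda>_. a) \<psi>)"
    using sat unfolding aleph1_saturated_def .
  have "countable A \<and> A \<subseteq> U \<and> (\<forall>\<psi>\<in>f ` A. hpar \<psi> \<subseteq> A \<and> hfv \<psi> \<subseteq> {0}) \<and>
        (\<forall>F. F \<subseteq> f ` A \<and> finite F \<longrightarrow> (\<exists>a\<in>U. \<forall>\<psi>\<in>F. hsat k U E (\<lambda>_. a) \<psi>))"
    using cA AU hp fs by (intro conjI)
  from satd[rule_format, OF this] obtain a where a: "a \<in> U" "\<forall>\<psi>\<in>f ` A. hsat k U E (\<lambda>_. a) \<psi>"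
    by (elim bexE)
  then have "a \<notin> A" unfolding f_def by auto
  then show ?thesis using a unfolding A_def by auto
qed

lemma canon_exists:
  assumes mod: "model_Tk k U E" and sat: "aleph1_saturated k U E" and MU: "M \<subseteq> U"
    and cM: "countable M"
  shows "\<exists>c :: nat \<Rightarrow> 'a. inj c \<and> (\<forall>j. c j \<notin> M)"
proof -
  have "\<not> finite (U - M)"
  proof
    assume "finite (U - M)"
    from outside[OF mod sat MU cM this] show False by auto
  qed
  from infinite_countable_subset[OF this] show ?thesis by auto
qed

theorem proposition5p15:
  fixes k n :: nat and U M :: "'a set" and E :: "'a set set"
    and W :: "(nat set \<Rightarrow> real) \<Rightarrow> real"
    and isos :: "nat \<Rightarrow> ('a set \<Rightarrow> bool) \<Rightarrow> real"
    and \<phi> :: "'a hfm"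
  assumes "k > 2"
    and "model_Tk k U E" and "aleph1_saturated k U E"
    and "elem_sub k U E M" and "countable M"
    and "borel_hypergraphon k W"
    and "\<forall>j\<in>{1..k - 1}. measure_iso (lam k M j) unit_leb (isos j)"
    and "hwf k \<phi>" and "hpar \<phi> = {}" and "hfv \<phi> \<subseteq> {0..n}"
  shows "\<exists>g\<in>borel_measurable (stone_borel k M E n).
           \<forall>bs. set bs \<subseteq> U \<and> length bs = n \<longrightarrow> g (tp k U E M bs) = muW k U E M isos W \<phi> bs"
proof -
  note k = assms(1)
  have MU: "M \<subseteq> U" and Mne: "M \<noteq> {}" using assms(4) unfolding elem_sub_def by auto
  have Esub: "E \<subseteq> ksubsets U k" using assms(2) unfolding model_Tk_def by auto
  have isos: "\<forall>j\<in>{1..k - 1}. isos j \<in> lam k M j \<rightarrow>\<^sub>M unit_leb"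
    using assms(7) unfolding measure_iso_def by auto
  have WM: "W \<in> borel_measurable (hg_space k)" using assms(6) unfolding borel_hypergraphon_def by auto
  obtain c :: "nat \<Rightarrow> 'a" where c: "inj c" "\<And>j. c j \<notin> M"
    using canon_exists[OF assms(2,3) MU assms(5)] by blast
  interpret canon M c using c by unfold_locales auto
  define g where "g = (\<lambda>p. Gs k M isos W c n \<phi> (shp M n p) p)"
  have gm: "g \<in> borel_measurable (stone_borel k M E n)"
    unfolding g_def
    by (rule measurable_compose_countable'[OF Gs_meas[OF k isos WM] shp_meas[OF assms(5) Mne] countable_SH[OF assms(5)]])
  have "\<forall>bs. set bs \<subseteq> U \<and> length bs = n \<longrightarrow> g (tp k U E M bs) = muW k U E M isos W \<phi> bs"
  proof (intro allI impI)
    fix bs :: "'a list" assume bs: "set bs \<subseteq> U \<and> length bs = n"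
    show "g (tp k U E M bs) = muW k U E M isos W \<phi> bs"
      unfolding g_def using muW_eq[OF k Esub _ assms(10,9) isos assms(6)] bs by simp
  qed
  then show ?thesis using gm by blast
qed


end
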